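(* Let $X_1,\dots,X_N$ be i.i.d. with distribution function $F$, let $0<\alpha<1$, and suppose $f=F'$ exists and is positive and Lipschitz in a neighborhood of $\xi_\alpha=F^{-1}(\alpha)$. Let $G$ be a function defined in a neighborhood of $\xi_\alpha$ such that $g=G'$ exists there and satisfies a Lipschitz condition. Let $k=k(N)$ be integers with $k=\alpha N+O(1)$ as $N\to\infty$, and let $N_\alpha=\#\{i:X_i\le\xi_\alpha\}$. Then $$\frac1N\sum_{i=k}^{N_\alpha}\big(G(X_{i:N})-G(\xi_\alpha)\big)=-\frac{(N_\alpha-\alpha N)^2}{2N^2}\,\frac{g(\xi_\alpha)}{f(\xi_\alpha)}+R_N,$$ where for every $c>0$ there is $A>0$ not depending on $N$ with $$P\big(|R_N|>A(\log N/N)^{5/4}\big)=O(N^{-c})\quad\text{as }N\to\infty.$$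
   Context: $X_{1:N}\le\dots\le X_{N:N}$ are the order statistics; $F^{-1}(u)=\inf\{x:F(x)\ge u\}$. Summation convention: for integers $k,m$, $\sum_{i=k}^m(\cdot)_i=\mathrm{sign}[m-k]\sum_{i=k\wedge m}^{k\vee m}(\cdot)_i$. *)

theory Defs
  imports "HOL-Probability.Probability"
begin

definition quantile :: "(real \<Rightarrow> real) \<Rightarrow> real \<Rightarrow> real" where
  "quantile F u = Inf {x. F x \<ge> u}"

text \<open>Order statistics of the first N observations X 0, ..., X (N-1), 1-based:
  order_stat X N w i = X_{i:N}(w) for 1 <= i <= N (unspecified otherwise).\<close>
definition order_stat :: "(nat \<Rightarrow> 'a \<Rightarrow> real) \<Rightarrow> nat \<Rightarrow> 'a \<Rightarrow> int \<Rightarrow> real" where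
  "order_stat X N w i = sort (map (\<lambda>j. X j w) [0..<N]) ! (nat i - 1)"

text \<open>Summation convention: sum_{i=k}^m a_i = sign(m-k) * sum_{i = min k m}^{max k m} a_i.\<close>
definition conv_sum :: "int \<Rightarrow> int \<Rightarrow> (int \<Rightarrow> real) \<Rightarrow> real" where
  "conv_sum k m a = sgn (real_of_int (m - k)) * (\<Sum>i\<in>{min k m..max k m}. a i)"

definition count_le :: "(nat \<Rightarrow> 'a \<Rightarrow> real) \<Rightarrow> nat \<Rightarrow> real \<Rightarrow> 'a \<Rightarrow> nat" where
  "count_le X N \<xi> w = card {i. i < N \<and> X i w \<le> \<xi>}"

end

theory Submission
  imports Defs
begin

lemma exp_le_quad:
  fixes x :: real assumes "\<bar>x\<bar> \<le> 1" shows "exp x \<le> 1 + x + x\<^sup>2"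
proof (cases "x \<ge> 0")
  case True thus ?thesis using exp_bound[of x] assms by auto
next
  case False
  have e: "exp (-x) \<ge> 1 - x" using exp_ge_add_one_self[of "-x"] by simp
  have "exp x = 1 / exp (-x)" by (simp add: exp_minus field_simps)
  also have "\<dots> \<le> 1 / (1 - x)" using e False by (intro divide_left_mono) auto
  also have "\<dots> \<le> 1 + x + x\<^sup>2"
  proof -
    have "(1 + x + x\<^sup>2) * (1 - x) = 1 - x^3" by (simp add: algebra_simps power2_eq_square power3_eq_cube)
    moreover have "x^3 \<le> 0" using mult_nonneg_nonpos[of "x*x" x] False by (simp add: power3_eq_cube)
    ultimately show ?thesis using False by (simp add: divide_simps)
  qed
  finally show ?thesis .
qed

lemma (in prob_space) mgf_small_var:
  fixes Z :: "'a \<Rightarrow> real"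
  assumes Z[measurable]: "Z \<in> borel_measurable M" and bnd: "\<And>\<omega>. \<omega> \<in> space M \<Longrightarrow> \<bar>Z \<omega>\<bar> \<le> 1"
    and var: "expectation (\<lambda>\<omega>. (Z \<omega>)\<^sup>2) \<le> p" and l: "0 \<le> l" "l \<le> 1"
  shows "expectation (\<lambda>\<omega>. exp (l * (Z \<omega> - expectation Z))) \<le> exp (l\<^sup>2 * p)"
proof -
  define \<mu> where "\<mu> = expectation Z"
  have aeZ: "AE x in M. norm (Z x) \<le> 1" using bnd by (intro AE_I2) simp
  have intZ: "integrable M Z"
    using aeZ by (rule integrable_const_bound) simp
  have intZ2: "integrable M (\<lambda>\<omega>. (Z \<omega>)\<^sup>2)"
    by (rule integrable_const_bound[where B=1]) (auto simp: bnd abs_square_le_1)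
  have lZ: "\<bar>l * Z \<omega>\<bar> \<le> 1" if "\<omega> \<in> space M" for \<omega>
    using bnd[OF that] l by (simp add: abs_mult mult_le_one)
  have inte: "integrable M (\<lambda>\<omega>. exp (l * Z \<omega>))"
  proof (rule integrable_const_bound[where B="exp 1"])
    show "AE x in M. norm (exp (l * Z x)) \<le> exp 1"
    proof (rule AE_I2)
      fix x assume "x \<in> space M"
      hence "l * Z x \<le> 1" using lZ by (simp add: abs_le_iff)
      thus "norm (exp (l * Z x)) \<le> exp 1" by simp
    qed
  qed simp
  have "expectation (\<lambda>\<omega>. exp (l * Z \<omega>)) \<le> expectation (\<lambda>\<omega>. 1 + l * Z \<omega> + l\<^sup>2 * (Z \<omega>)\<^sup>2)"
  proof (rule integral_mono)
    fix x assume "x \<in> space M"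
    from exp_le_quad[OF lZ[OF this]]
    show "exp (l * Z x) \<le> 1 + l * Z x + l\<^sup>2 * (Z x)\<^sup>2" by (simp add: power_mult_distrib)
  qed (use intZ intZ2 inte in auto)
  also have "\<dots> = 1 + l * \<mu> + l\<^sup>2 * expectation (\<lambda>\<omega>. (Z \<omega>)\<^sup>2)"
    using intZ intZ2 by (simp add: \<mu>_def prob_space)
  also have "\<dots> \<le> 1 + (l * \<mu> + l\<^sup>2 * p)"
    using var l by (simp add: mult_left_mono)
  also have "\<dots> \<le> exp (l * \<mu> + l\<^sup>2 * p)" by (rule exp_ge_add_one_self)
  finally have A: "expectation (\<lambda>\<omega>. exp (l * Z \<omega>)) \<le> exp (l * \<mu> + l\<^sup>2 * p)" .
  have "expectation (\<lambda>\<omega>. exp (l * (Z \<omega> - \<mu>))) = expectation (\<lambda>\<omega>. exp (- (l * \<mu>)) * exp (l * Z \<omega>))"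
    by (simp add: right_diff_distrib exp_diff exp_minus field_simps)
  also have "\<dots> = exp (- (l * \<mu>)) * expectation (\<lambda>\<omega>. exp (l * Z \<omega>))" by simp
  also have "\<dots> \<le> exp (- (l * \<mu>)) * exp (l * \<mu> + l\<^sup>2 * p)" using A by simp
  also have "\<dots> = exp (l\<^sup>2 * p)" by (simp flip: exp_add)
  finally show ?thesis by (simp add: \<mu>_def)
qed

lemma (in prob_space) chernoff_sum:
  fixes Z :: "'i \<Rightarrow> 'a \<Rightarrow> real"
  assumes fin: "finite I" and indep: "indep_vars (\<lambda>_. borel) Z I"
    and bnd: "\<And>i \<omega>. i \<in> I \<Longrightarrow> \<omega> \<in> space M \<Longrightarrow> \<bar>Z i \<omega>\<bar> \<le> 1"
    and var: "\<And>i. i \<in> I \<Longrightarrow> expectation (\<lambda>\<omega>. (Z i \<omega>)\<^sup>2) \<le> p"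
    and l: "0 < l" "l \<le> 1"
  shows "prob {\<omega> \<in> space M. (\<Sum>i\<in>I. Z i \<omega>) - (\<Sum>i\<in>I. expectation (Z i)) \<ge> \<epsilon>}
           \<le> exp (real (card I) * l\<^sup>2 * p - l * \<epsilon>)"
proof -
  have meas: "Z i \<in> borel_measurable M" if "i \<in> I" for i
    using indep that unfolding indep_vars_def by blast
  define \<mu> where "\<mu> i = expectation (Z i)" for i
  define Y where "Y i \<omega> = exp (l * (Z i \<omega> - \<mu> i))" for i \<omega>
  have indY: "indep_vars (\<lambda>_. borel) Y I"
    unfolding Y_def by (rule indep_vars_compose2[OF indep]) auto
  have measY: "Y i \<in> borel_measurable M" if "i \<in> I" for i
    using meas[OF that] unfolding Y_def by measurable
  have bndY: "\<bar>Y i \<omega>\<bar> \<le> exp (l * (1 + \<bar>\<mu> i\<bar>))" if "i \<in> I" "\<omega> \<in> space M" for i \<omega>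
    using bnd[OF that] l unfolding Y_def by (auto intro!: mult_left_mono)
  have intY: "integrable M (Y i)" if "i \<in> I" for i
    by (rule integrable_const_bound[where B="exp (l * (1 + \<bar>\<mu> i\<bar>))"]) (use bndY measY that in auto)
  define u where "u \<omega> = (\<Prod>i\<in>I. Y i \<omega>)" for \<omega>
  have intu: "integrable M u" unfolding u_def
    by (rule indep_vars_integrable[OF fin indY intY])
  have Eu: "expectation u = (\<Prod>i\<in>I. expectation (Y i))" unfolding u_def
    by (rule indep_vars_lebesgue_integral[OF fin indY intY])
  have u_eq: "u \<omega> = exp (l * ((\<Sum>i\<in>I. Z i \<omega>) - (\<Sum>i\<in>I. \<mu> i)))" for \<omega>
    unfolding u_def Y_def by (simp add: exp_sum[OF fin, symmetric] sum_distrib_left sum_subtractf[symmetric] right_diff_distrib)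
  have sub: "{\<omega> \<in> space M. (\<Sum>i\<in>I. Z i \<omega>) - (\<Sum>i\<in>I. expectation (Z i)) \<ge> \<epsilon>}
        \<subseteq> {\<omega> \<in> space M. u \<omega> \<ge> exp (l * \<epsilon>)}"
    using l by (auto simp: u_eq \<mu>_def)
  have "prob {\<omega> \<in> space M. (\<Sum>i\<in>I. Z i \<omega>) - (\<Sum>i\<in>I. expectation (Z i)) \<ge> \<epsilon>}
        \<le> prob {\<omega> \<in> space M. u \<omega> \<ge> exp (l * \<epsilon>)}"
    using sub intu by (intro finite_measure_mono) auto
  also have "\<dots> \<le> expectation u / exp (l * \<epsilon>)"
    by (rule integral_Markov_inequality_measure[OF intu, where A="space M"]) (auto simp: u_eq)
  also have "expectation u \<le> (\<Prod>i\<in>I. exp (l\<^sup>2 * p))"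
    unfolding Eu
  proof (rule prod_mono, safe)
    fix i assume i: "i \<in> I"
    show "0 \<le> expectation (Y i)" unfolding Y_def by simp
    show "expectation (Y i) \<le> exp (l\<^sup>2 * p)"
      unfolding Y_def \<mu>_def by (rule mgf_small_var[OF meas[OF i] bnd[OF i] var[OF i]]) (use l in auto)
  qed
  hence "expectation u / exp (l * \<epsilon>) \<le> (\<Prod>i\<in>I. exp (l\<^sup>2 * p)) / exp (l * \<epsilon>)"
    by (simp add: divide_right_mono)
  also have "\<dots> = exp (real (card I) * l\<^sup>2 * p - l * \<epsilon>)"
    by (simp add: exp_diff prod_constant exp_of_nat_mult[symmetric] mult.assoc)
  finally show ?thesis .
qed

lemma (in prob_space) chernoff_abs_opt:
  fixes Z :: "'i \<Rightarrow> 'a \<Rightarrow> real"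
  assumes fin: "finite I" and ne: "I \<noteq> {}" and indep: "indep_vars (\<lambda>_. borel) Z I"
    and bnd: "\<And>i \<omega>. i \<in> I \<Longrightarrow> \<omega> \<in> space M \<Longrightarrow> \<bar>Z i \<omega>\<bar> \<le> 1"
    and var: "\<And>i. i \<in> I \<Longrightarrow> expectation (\<lambda>\<omega>. (Z i \<omega>)\<^sup>2) \<le> p"
    and p: "p > 0" and eps: "\<epsilon> > 0" "\<epsilon> \<le> 2 * real (card I) * p"
  shows "prob {\<omega> \<in> space M. \<bar>(\<Sum>i\<in>I. Z i \<omega>) - (\<Sum>i\<in>I. expectation (Z i))\<bar> \<ge> \<epsilon>}
           \<le> 2 * exp (- \<epsilon>\<^sup>2 / (4 * real (card I) * p))"
proof -
  define n where "n = real (card I)"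
  have n: "n > 0" using fin ne by (simp add: n_def card_gt_0_iff)
  define l where "l = \<epsilon> / (2 * n * p)"
  have l: "0 < l" "l \<le> 1" using n p eps by (auto simp: l_def n_def field_simps)
  have ex: "n * l\<^sup>2 * p - l * \<epsilon> = - \<epsilon>\<^sup>2 / (4 * n * p)"
    using n p by (simp add: l_def field_simps power2_eq_square)
  have meas: "Z i \<in> borel_measurable M" if "i \<in> I" for i
    using indep that unfolding indep_vars_def by blast
  have up: "prob {\<omega> \<in> space M. (\<Sum>i\<in>I. Z i \<omega>) - (\<Sum>i\<in>I. expectation (Z i)) \<ge> \<epsilon>}
        \<le> exp (- \<epsilon>\<^sup>2 / (4 * n * p))"
    using chernoff_sum[OF fin indep bnd var l, of \<epsilon>] ex by (simp add: n_def)
  have indep': "indep_vars (\<lambda>_. borel) (\<lambda>i \<omega>. - Z i \<omega>) I"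
    by (rule indep_vars_compose2[OF indep, where Y="\<lambda>i x. - x"]) auto
  have E': "expectation (\<lambda>\<omega>. - Z i \<omega>) = - expectation (Z i)" for i by simp
  have lo: "prob {\<omega> \<in> space M. (\<Sum>i\<in>I. - Z i \<omega>) - (\<Sum>i\<in>I. expectation (\<lambda>\<omega>. - Z i \<omega>)) \<ge> \<epsilon>}
        \<le> exp (- \<epsilon>\<^sup>2 / (4 * n * p))"
    using chernoff_sum[OF fin indep', of p l \<epsilon>] bnd var l ex by (simp add: n_def)
  have "{\<omega> \<in> space M. \<bar>(\<Sum>i\<in>I. Z i \<omega>) - (\<Sum>i\<in>I. expectation (Z i))\<bar> \<ge> \<epsilon>}
      = {\<omega> \<in> space M. (\<Sum>i\<in>I. Z i \<omega>) - (\<Sum>i\<in>I. expectation (Z i)) \<ge> \<epsilon>}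
        \<union> {\<omega> \<in> space M. (\<Sum>i\<in>I. - Z i \<omega>) - (\<Sum>i\<in>I. expectation (\<lambda>\<omega>. - Z i \<omega>)) \<ge> \<epsilon>}"
  proof -
    have sn: "\<And>\<omega>. (\<Sum>i\<in>I. - Z i \<omega>) = - (\<Sum>i\<in>I. Z i \<omega>)" by (simp add: sum_negf)
    have se: "(\<Sum>i\<in>I. expectation (\<lambda>\<omega>. - Z i \<omega>)) = - (\<Sum>i\<in>I. expectation (Z i))"
      by (simp add: sum_negf)
    show ?thesis by (simp only: sn se) (auto simp: abs_if)
  qed
  also have "prob \<dots> \<le> prob {\<omega> \<in> space M. (\<Sum>i\<in>I. Z i \<omega>) - (\<Sum>i\<in>I. expectation (Z i)) \<ge> \<epsilon>}
        + prob {\<omega> \<in> space M. (\<Sum>i\<in>I. - Z i \<omega>) - (\<Sum>i\<in>I. expectation (\<lambda>\<omega>. - Z i \<omega>)) \<ge> \<epsilon>}"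
  proof -
    have mS[measurable]: "(\<lambda>\<omega>. \<Sum>i\<in>I. Z i \<omega>) \<in> borel_measurable M"
      using meas by (intro borel_measurable_sum) auto
    have mS2[measurable]: "(\<lambda>\<omega>. \<Sum>i\<in>I. - Z i \<omega>) \<in> borel_measurable M"
      using meas by (intro borel_measurable_sum) auto
    show ?thesis by (intro measure_Un_le) measurable
  qed
  finally have "prob {\<omega> \<in> space M. \<bar>(\<Sum>i\<in>I. Z i \<omega>) - (\<Sum>i\<in>I. expectation (Z i))\<bar> \<ge> \<epsilon>}
     \<le> exp (- \<epsilon>\<^sup>2 / (4 * n * p)) + exp (- \<epsilon>\<^sup>2 / (4 * n * p))" using up lo by linarith
  then show ?thesis unfolding n_def by linarith
qed

lemma sorted_nth_le_iff:
  fixes ys :: "real list"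
  assumes s: "sorted ys" and i: "i < length ys"
  shows "ys ! i \<le> t \<longleftrightarrow> i < card {j. j < length ys \<and> ys ! j \<le> t}"
proof
  assume h: "ys ! i \<le> t"
  have "{..i} \<subseteq> {j. j < length ys \<and> ys ! j \<le> t}"
    using h i s by (auto simp: sorted_iff_nth_mono intro: order_trans)
  from card_mono[OF _ this] show "i < card {j. j < length ys \<and> ys ! j \<le> t}" by simp
next
  assume h: "i < card {j. j < length ys \<and> ys ! j \<le> t}"
  show "ys ! i \<le> t"
  proof (rule ccontr)
    assume "\<not> ys ! i \<le> t"
    hence "{j. j < length ys \<and> ys ! j \<le> t} \<subseteq> {..<i}"
      using s i by (auto simp: sorted_iff_nth_mono not_less) (meson le_less_trans not_le sorted_nth_mono s)
    from card_mono[OF _ this] h show False by simp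
  qed
qed

lemma order_stat_le_iff:
  assumes "1 \<le> i" "i \<le> int N"
  shows "order_stat X N w i \<le> t \<longleftrightarrow> i \<le> int (count_le X N t w)"
proof -
  define xs where "xs = map (\<lambda>j. X j w) [0..<N]"
  define ys where "ys = sort xs"
  have len: "length ys = N" by (simp add: ys_def xs_def)
  have ii: "nat i - 1 < length ys" using assms len by linarith
  have "order_stat X N w i = ys ! (nat i - 1)" by (simp add: order_stat_def ys_def xs_def)
  moreover have "card {j. j < length ys \<and> ys ! j \<le> t} = length (filter (\<lambda>x. x \<le> t) ys)"
    by (simp add: length_filter_conv_card)
  moreover have "length (filter (\<lambda>x. x \<le> t) ys) = length (filter (\<lambda>x. x \<le> t) xs)"
    unfolding ys_def by (metis mset_filter mset_sort size_mset)
  moreover have "length (filter (\<lambda>x. x \<le> t) xs) = count_le X N t w"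
    by (simp add: xs_def length_filter_conv_card count_le_def cong: conj_cong)
  ultimately show ?thesis
    using sorted_nth_le_iff[OF _ ii, of t] assms by (simp add: ys_def) linarith
qed

lemma sum_int_shift:
  "(\<Sum>i\<in>{a..a + int n}. real_of_int (i - a)) = real n * (real n + 1) / 2"
proof (induction n)
  case 0 then show ?case by simp
next
  case (Suc n)
  have "{a..a + int (Suc n)} = insert (a + int (Suc n)) {a..a + int n}" by auto
  then show ?case using Suc by (simp add: field_simps)
qed

lemma sum_int_interval:
  assumes "a \<le> b"
  shows "(\<Sum>i\<in>{a..b}. real_of_int (i - a)) = real_of_int (b - a) * (real_of_int (b - a) + 1) / 2"
  using sum_int_shift[of a "nat (b - a)"] assms by simp

lemma conv_sum_approx:
  fixes a e :: "int \<Rightarrow> real"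
  assumes ae: "\<And>i. min k m \<le> i \<Longrightarrow> i \<le> max k m \<Longrightarrow> a i = c * real_of_int (i - m) + e i"
    and eb: "\<And>i. min k m \<le> i \<Longrightarrow> i \<le> max k m \<Longrightarrow> \<bar>e i\<bar> \<le> E"
  shows "\<bar>conv_sum k m a + c * real_of_int \<bar>m - k\<bar> * (real_of_int \<bar>m - k\<bar> + 1) / 2\<bar>
          \<le> (real_of_int \<bar>m - k\<bar> + 1) * E"
proof -
  define lo hi where "lo = min k m" and "hi = max k m"
  have fin: "finite {lo..hi}" by simp
  have cardr: "real (card {lo..hi}) = real_of_int \<bar>m - k\<bar> + 1"
    by (simp add: lo_def hi_def)
  have s1: "(\<Sum>i\<in>{lo..hi}. a i) = c * (\<Sum>i\<in>{lo..hi}. real_of_int (i - m)) + (\<Sum>i\<in>{lo..hi}. e i)"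
    using ae by (simp add: lo_def hi_def sum.distrib sum_distrib_left)
  have es: "\<bar>\<Sum>i\<in>{lo..hi}. e i\<bar> \<le> (real_of_int \<bar>m - k\<bar> + 1) * E"
  proof -
    have "\<bar>\<Sum>i\<in>{lo..hi}. e i\<bar> \<le> (\<Sum>i\<in>{lo..hi}. \<bar>e i\<bar>)" by (rule sum_abs)
    also have "\<dots> \<le> (\<Sum>i\<in>{lo..hi}. E)" using eb by (intro sum_mono) (auto simp: lo_def hi_def)
    also have "\<dots> = (real_of_int \<bar>m - k\<bar> + 1) * E" using cardr by simp
    finally show ?thesis .
  qed
  have S: "(\<Sum>i\<in>{lo..hi}. real_of_int (i - m)) = (\<Sum>i\<in>{lo..hi}. real_of_int (i - lo)) + real (card {lo..hi}) * real_of_int (lo - m)"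
  proof -
    have "(\<Sum>i\<in>{lo..hi}. real_of_int (i - m)) = (\<Sum>i\<in>{lo..hi}. (real_of_int (i - lo) + real_of_int (lo - m)))"
      by (rule sum.cong) auto
    then show ?thesis by (simp only: sum.distrib sum_constant)
  qed
  consider "k < m" | "k = m" | "m < k" by linarith
  then show ?thesis
  proof cases
    case 1
    hence "lo = k" "hi = m" by (auto simp: lo_def hi_def)
    moreover have "conv_sum k m a = (\<Sum>i\<in>{lo..hi}. a i)" using 1 by (simp add: conv_sum_def lo_def hi_def)
    moreover have "(\<Sum>i\<in>{lo..hi}. real_of_int (i - m)) = - (real_of_int \<bar>m - k\<bar> * (real_of_int \<bar>m - k\<bar> + 1) / 2)"
      using S sum_int_interval[of lo hi] cardr 1 \<open>lo = k\<close> \<open>hi = m\<close> by (simp add: field_simps)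
    ultimately have "conv_sum k m a + c * real_of_int \<bar>m - k\<bar> * (real_of_int \<bar>m - k\<bar> + 1) / 2 = (\<Sum>i\<in>{lo..hi}. e i)"
      using s1 by simp
    then show ?thesis using es by simp
  next
    case 2 then show ?thesis using eb[of k] by (simp add: conv_sum_def)
  next
    case 3
    hence "lo = m" "hi = k" by (auto simp: lo_def hi_def)
    moreover have "conv_sum k m a = - (\<Sum>i\<in>{lo..hi}. a i)" using 3 by (simp add: conv_sum_def lo_def hi_def)
    moreover have "(\<Sum>i\<in>{lo..hi}. real_of_int (i - m)) = (real_of_int \<bar>m - k\<bar> * (real_of_int \<bar>m - k\<bar> + 1) / 2)"
      using sum_int_interval[of lo hi] 3 \<open>lo = m\<close> \<open>hi = k\<close> by simp
    ultimately have "conv_sum k m a + c * real_of_int \<bar>m - k\<bar> * (real_of_int \<bar>m - k\<bar> + 1) / 2 = - (\<Sum>i\<in>{lo..hi}. e i)"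
      using s1 by simp
    then show ?thesis using es by simp
  qed
qed

lemma os_approx:
  fixes cnt :: "real \<Rightarrow> nat" and os :: "int \<Rightarrow> real" and N :: nat
  assumes N: "N \<ge> 1"
    and os_iff: "\<And>i t. 1 \<le> i \<Longrightarrow> i \<le> int N \<Longrightarrow> (os i \<le> t \<longleftrightarrow> i \<le> int (cnt t))"
    and U: "\<And>t. \<bar>t - \<xi>\<bar> \<le> r \<Longrightarrow> \<bar>real (cnt t) - real (cnt \<xi>) - real N * (F t - \<alpha>)\<bar> \<le> D2"
    and TF: "\<And>t. \<bar>t - \<xi>\<bar> \<le> r \<Longrightarrow> \<bar>F t - \<alpha> - f0 * (t - \<xi>)\<bar> \<le> Lf * (t - \<xi>)\<^sup>2"
    and f0: "f0 > 0" and Lf: "Lf \<ge> 0" and D2: "D2 \<ge> 0"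
    and i: "1 \<le> i" "i \<le> int N"
    and rng: "\<bar>real_of_int (i - int (cnt \<xi>))\<bar> / (real N * f0) + \<eta> \<le> r"
    and eta: "\<eta> = (Lf * r\<^sup>2 + (D2 + 1) / real N) / f0"
  shows "\<bar>os i - (\<xi> + real_of_int (i - int (cnt \<xi>)) / (real N * f0))\<bar> \<le> \<eta>"
proof -
  define u where "u = \<xi> + real_of_int (i - int (cnt \<xi>)) / (real N * f0)"
  have Npos: "real N > 0" using N by simp
  have eta0: "\<eta> \<ge> 0" using eta f0 Lf D2 Npos by (simp add: divide_nonneg_pos)
  have key: "real N * f0 * \<eta> = real N * Lf * r\<^sup>2 + D2 + 1"
    using eta f0 Npos by (simp add: field_simps)
  have ku: "real N * f0 * (u - \<xi>) = real_of_int (i - int (cnt \<xi>))"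
    using f0 Npos by (simp add: u_def field_simps)
  have absu: "\<bar>u - \<xi>\<bar> = \<bar>real_of_int (i - int (cnt \<xi>))\<bar> / (real N * f0)"
    using f0 Npos by (simp add: u_def abs_divide abs_mult)
  have sq: "(t - \<xi>)\<^sup>2 \<le> r\<^sup>2" if "\<bar>t - \<xi>\<bar> \<le> r" for t
    using that by (simp add: abs_le_square_iff[symmetric])
  define tp where "tp = u + \<eta>"
  have tpr: "\<bar>tp - \<xi>\<bar> \<le> r" using rng absu eta0 unfolding tp_def by (smt (verit))
  have "F tp - \<alpha> \<ge> f0 * (tp - \<xi>) - Lf * r\<^sup>2"
    using TF[OF tpr] sq[OF tpr] Lf mult_left_mono[OF sq[OF tpr] Lf] by linarith
  hence "real N * (F tp - \<alpha>) \<ge> real N * (f0 * (tp - \<xi>) - Lf * r\<^sup>2)"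
    using Npos by (intro mult_left_mono) auto
  moreover have "real N * (f0 * (tp - \<xi>) - Lf * r\<^sup>2) = real_of_int (i - int (cnt \<xi>)) + D2 + 1"
    using key ku unfolding tp_def by (simp add: algebra_simps)
  ultimately have "real (cnt tp) \<ge> real_of_int i + 1"
    using U[OF tpr] by linarith
  hence up: "os i \<le> tp" using os_iff[OF i] by simp
  define tm where "tm = u - \<eta>"
  have tmr: "\<bar>tm - \<xi>\<bar> \<le> r" using rng absu eta0 unfolding tm_def by (smt (verit))
  have "F tm - \<alpha> \<le> f0 * (tm - \<xi>) + Lf * r\<^sup>2"
    using TF[OF tmr] sq[OF tmr] Lf mult_left_mono[OF sq[OF tmr] Lf] by linarith
  hence "real N * (F tm - \<alpha>) \<le> real N * (f0 * (tm - \<xi>) + Lf * r\<^sup>2)"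
    using Npos by (intro mult_left_mono) auto
  moreover have "real N * (f0 * (tm - \<xi>) + Lf * r\<^sup>2) = real_of_int (i - int (cnt \<xi>)) - D2 - 1"
    using key ku unfolding tm_def by (simp add: algebra_simps)
  ultimately have "real (cnt tm) \<le> real_of_int i - 1"
    using U[OF tmr] by linarith
  hence lo: "\<not> os i \<le> tm" using os_iff[OF i] by simp
  show ?thesis using up lo unfolding tp_def tm_def u_def by linarith
qed

lemma DET:
  fixes cnt :: "real \<Rightarrow> nat" and os :: "int \<Rightarrow> real" and N :: nat and k :: int
  assumes N: "N \<ge> 1"
    and os_iff: "\<And>i t. 1 \<le> i \<Longrightarrow> i \<le> int N \<Longrightarrow> (os i \<le> t \<longleftrightarrow> i \<le> int (cnt t))"
    and U: "\<And>t. \<bar>t - \<xi>\<bar> \<le> r \<Longrightarrow> \<bar>real (cnt t) - real (cnt \<xi>) - real N * (F t - \<alpha>)\<bar> \<le> D2"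
    and TF: "\<And>t. \<bar>t - \<xi>\<bar> \<le> r \<Longrightarrow> \<bar>F t - \<alpha> - f0 * (t - \<xi>)\<bar> \<le> Lf * (t - \<xi>)\<^sup>2"
    and TG: "\<And>t. \<bar>t - \<xi>\<bar> \<le> r \<Longrightarrow> \<bar>G t - G \<xi> - g0 * (t - \<xi>)\<bar> \<le> Lg * (t - \<xi>)\<^sup>2"
    and f0: "f0 > 0" and Lf: "Lf \<ge> 0" and Lg: "Lg \<ge> 0" and D2: "D2 \<ge> 0"
    and k: "1 \<le> k" "k \<le> int N" and m: "1 \<le> cnt \<xi>" "cnt \<xi> \<le> N"
    and rng: "\<bar>real_of_int (k - int (cnt \<xi>))\<bar> / (real N * f0) + \<eta> \<le> r"
    and eta: "\<eta> = (Lf * r\<^sup>2 + (D2 + 1) / real N) / f0"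
  shows "\<bar>conv_sum k (int (cnt \<xi>)) (\<lambda>i. G (os i) - G \<xi>)
           + g0 / (real N * f0) * real_of_int \<bar>int (cnt \<xi>) - k\<bar> * (real_of_int \<bar>int (cnt \<xi>) - k\<bar> + 1) / 2\<bar>
         \<le> (real_of_int \<bar>int (cnt \<xi>) - k\<bar> + 1) * (\<bar>g0\<bar> * \<eta> + Lg * r\<^sup>2)"
proof -
  define c where "c = g0 / (real N * f0)"
  define m where "m = int (cnt \<xi>)"
  define e where "e i = G (os i) - G \<xi> - c * real_of_int (i - m)" for i
  have Npos: "real N > 0" using N by simp
  have eb: "\<bar>e i\<bar> \<le> \<bar>g0\<bar> * \<eta> + Lg * r\<^sup>2" if i: "min k m \<le> i" "i \<le> max k m" for i
  proof -
    have i1: "1 \<le> i" "i \<le> int N" using i k m by (auto simp: m_def)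
    have "\<bar>real_of_int (i - m)\<bar> \<le> \<bar>real_of_int (k - m)\<bar>" using i by linarith
    hence "\<bar>real_of_int (i - m)\<bar> / (real N * f0) \<le> \<bar>real_of_int (k - m)\<bar> / (real N * f0)"
      using Npos f0 by (intro divide_right_mono) auto
    hence rng_i: "\<bar>real_of_int (i - int (cnt \<xi>))\<bar> / (real N * f0) + \<eta> \<le> r" using rng by (simp add: m_def)
    define u where "u = \<xi> + real_of_int (i - m) / (real N * f0)"
    have ap: "\<bar>os i - u\<bar> \<le> \<eta>"
      using os_approx[OF N os_iff U TF f0 Lf D2 i1 rng_i eta] by (simp add: u_def m_def)
    have absu: "\<bar>u - \<xi>\<bar> = \<bar>real_of_int (i - m)\<bar> / (real N * f0)"
      using f0 Npos by (simp add: u_def abs_divide abs_mult)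
    have xr: "\<bar>os i - \<xi>\<bar> \<le> r" using ap absu rng_i by (smt (verit) m_def)
    have sq: "(os i - \<xi>)\<^sup>2 \<le> r\<^sup>2" using xr by (simp add: abs_le_square_iff[symmetric])
    have tg: "\<bar>G (os i) - G \<xi> - g0 * (os i - \<xi>)\<bar> \<le> Lg * r\<^sup>2"
      using TG[OF xr] mult_left_mono[OF sq Lg] by linarith
    have cu: "c * real_of_int (i - m) = g0 * (u - \<xi>)" by (simp add: c_def u_def)
    have "e i = (G (os i) - G \<xi> - g0 * (os i - \<xi>)) + g0 * (os i - u)"
      unfolding e_def cu by (simp add: algebra_simps)
    moreover have "\<bar>g0 * (os i - u)\<bar> \<le> \<bar>g0\<bar> * \<eta>" using ap by (simp add: abs_mult mult_left_mono)
    ultimately show ?thesis using tg by linarith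
  qed
  have "\<bar>conv_sum k m (\<lambda>i. G (os i) - G \<xi>) + c * real_of_int \<bar>m - k\<bar> * (real_of_int \<bar>m - k\<bar> + 1) / 2\<bar>
         \<le> (real_of_int \<bar>m - k\<bar> + 1) * (\<bar>g0\<bar> * \<eta> + Lg * r\<^sup>2)"
    by (rule conv_sum_approx[where e=e], simp add: e_def, erule (1) eb)
  then show ?thesis by (simp add: c_def m_def)
qed

lemma card_sum_if:
  fixes N :: nat and P :: "nat \<Rightarrow> bool"
  shows "real (card {j. j < N \<and> P j}) = (\<Sum>j<N. if P j then 1 else 0)"
proof (induction N)
  case 0 then show ?case by simp
next
  case (Suc N)
  have e: "{j. j < Suc N \<and> P j} = (if P N then insert N {j. j < N \<and> P j} else {j. j < N \<and> P j})"
    by (auto simp: less_Suc_eq)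
  show ?case using Suc by (simp add: e)
qed

definition phi :: "real \<Rightarrow> real \<Rightarrow> real \<Rightarrow> real" where
  "phi t s x = (if x \<le> t then 1 else 0) - (if x \<le> s then 1 else 0)"

lemma phi_meas[measurable]: "phi t s \<in> borel_measurable borel"
  unfolding phi_def by measurable

lemma phi_sq: "(phi t s x)\<^sup>2 = sgn (t - s) * phi t s x"
  unfolding phi_def by (auto simp: sgn_if)

lemma phi_abs: "\<bar>phi t s x\<bar> \<le> 1"
  unfolding phi_def by auto

lemma count_phi:
  "real (count_le X N t w) - real (count_le X N s w) = (\<Sum>j<N. phi t s (X j w))"
  unfolding count_le_def phi_def by (simp add: card_sum_if sum_subtractf)

lemma prob_dev_gen:
  fixes X :: "nat \<Rightarrow> 'a \<Rightarrow> real" and M :: "'a measure" and \<psi> :: "real \<Rightarrow> real"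
  assumes ps: "prob_space M"
    and rv: "\<And>i. X i \<in> borel_measurable M"
    and indep: "prob_space.indep_vars M (\<lambda>_. borel) X UNIV"
    and ident: "\<And>i. distr M borel (X i) = distr M borel (X 0)"
    and psi[measurable]: "\<psi> \<in> borel_measurable borel" and psib: "\<And>x. \<bar>\<psi> x\<bar> \<le> 1"
    and N: "N \<ge> 1" and p: "p > 0" and var: "prob_space.expectation M (\<lambda>\<omega>. (\<psi> (X 0 \<omega>))\<^sup>2) \<le> p"
    and eps: "\<epsilon> > 0" "\<epsilon> \<le> 2 * real N * p"
  shows "measure M {\<omega> \<in> space M. \<bar>(\<Sum>j<N. \<psi> (X j \<omega>)) - real N * prob_space.expectation M (\<lambda>\<omega>. \<psi> (X 0 \<omega>))\<bar> \<ge> \<epsilon>}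
          \<le> 2 * exp (- \<epsilon>\<^sup>2 / (4 * real N * p))"
proof -
  interpret prob_space M by (rule ps)
  define Z where "Z j \<omega> = \<psi> (X j \<omega>)" for j \<omega>
  have Eid: "expectation (\<lambda>\<omega>. g (X j \<omega>)) = expectation (\<lambda>\<omega>. g (X 0 \<omega>))"
    if [measurable]: "g \<in> borel_measurable borel" for g :: "real \<Rightarrow> real" and j
  proof -
    have "expectation (\<lambda>\<omega>. g (X j \<omega>)) = integral\<^sup>L (distr M borel (X j)) g"
      using rv by (simp add: integral_distr)
    also have "\<dots> = integral\<^sup>L (distr M borel (X 0)) g" by (simp add: ident[of j])
    also have "\<dots> = expectation (\<lambda>\<omega>. g (X 0 \<omega>))" using rv by (simp add: integral_distr)
    finally show ?thesis .
  qed
  have EZ: "expectation (Z j) = expectation (\<lambda>\<omega>. \<psi> (X 0 \<omega>))" for j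
    unfolding Z_def by (rule Eid) simp
  have EZ2: "expectation (\<lambda>\<omega>. (Z j \<omega>)\<^sup>2) \<le> p" for j
  proof -
    have "expectation (\<lambda>\<omega>. (Z j \<omega>)\<^sup>2) = expectation (\<lambda>\<omega>. (\<psi> (X 0 \<omega>))\<^sup>2)"
      unfolding Z_def by (rule Eid[of "\<lambda>x. (\<psi> x)\<^sup>2"]) simp
    thus ?thesis using var by simp
  qed
  have indZ: "indep_vars (\<lambda>_. borel) Z {..<N}"
    unfolding Z_def
    by (rule indep_vars_compose2[OF indep_vars_subset[OF indep]]) auto
  have "prob {\<omega> \<in> space M. \<bar>(\<Sum>j\<in>{..<N}. Z j \<omega>) - (\<Sum>j\<in>{..<N}. expectation (Z j))\<bar> \<ge> \<epsilon>}
          \<le> 2 * exp (- \<epsilon>\<^sup>2 / (4 * real (card {..<N}) * p))"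
  proof (rule chernoff_abs_opt[OF _ _ indZ])
    show "{..<N} \<noteq> {}" using N by (metis lessThan_iff empty_iff less_le_trans zero_less_one)
    show "\<And>i \<omega>. \<bar>Z i \<omega>\<bar> \<le> 1" by (simp add: Z_def psib)
    show "\<epsilon> \<le> 2 * real (card {..<N}) * p" using eps by simp
  qed (use p eps EZ2 in auto)
  moreover have "{\<omega> \<in> space M. \<bar>(\<Sum>j\<in>{..<N}. Z j \<omega>) - (\<Sum>j\<in>{..<N}. expectation (Z j))\<bar> \<ge> \<epsilon>}
     = {\<omega> \<in> space M. \<bar>(\<Sum>j<N. \<psi> (X j \<omega>)) - real N * expectation (\<lambda>\<omega>. \<psi> (X 0 \<omega>))\<bar> \<ge> \<epsilon>}"
    by (simp add: EZ Z_def)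
  ultimately show ?thesis by simp
qed

lemma prob_dev_bound:
  fixes X :: "nat \<Rightarrow> 'a \<Rightarrow> real" and M :: "'a measure"
  assumes ps: "prob_space M"
    and rv: "\<And>i. X i \<in> borel_measurable M"
    and indep: "prob_space.indep_vars M (\<lambda>_. borel) X UNIV"
    and ident: "\<And>i. distr M borel (X i) = distr M borel (X 0)"
    and F_def: "\<And>x. F x = measure M {\<omega> \<in> space M. X 0 \<omega> \<le> x}"
    and N: "N \<ge> 1" and p: "p > 0" and Fp: "\<bar>F t - F s\<bar> \<le> p"
    and eps: "\<epsilon> > 0" "\<epsilon> \<le> 2 * real N * p"
  shows "measure M {\<omega> \<in> space M. \<bar>real (count_le X N t \<omega>) - real (count_le X N s \<omega>) - real N * (F t - F s)\<bar> \<ge> \<epsilon>}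
          \<le> 2 * exp (- \<epsilon>\<^sup>2 / (4 * real N * p))"
proof -
  interpret prob_space M by (rule ps)
  define Z where "Z j \<omega> = phi t s (X j \<omega>)" for j \<omega>
  have Eid: "expectation (\<lambda>\<omega>. g (X j \<omega>)) = expectation (\<lambda>\<omega>. g (X 0 \<omega>))"
    if [measurable]: "g \<in> borel_measurable borel" for g :: "real \<Rightarrow> real" and j
  proof -
    have "expectation (\<lambda>\<omega>. g (X j \<omega>)) = integral\<^sup>L (distr M borel (X j)) g"
      using rv by (simp add: integral_distr)
    also have "\<dots> = integral\<^sup>L (distr M borel (X 0)) g" by (simp add: ident[of j])
    also have "\<dots> = expectation (\<lambda>\<omega>. g (X 0 \<omega>))" using rv by (simp add: integral_distr)
    finally show ?thesis .
  qed
  have Eind: "expectation (\<lambda>\<omega>. if X 0 \<omega> \<le> x then 1 else 0) = F x" for x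
  proof -
    have "expectation (\<lambda>\<omega>. if X 0 \<omega> \<le> x then 1 else 0) = expectation (indicator {\<omega> \<in> space M. X 0 \<omega> \<le> x})"
      by (intro Bochner_Integration.integral_cong) (auto simp: indicator_def)
    also have "\<dots> = F x" by (simp add: integral_indicator F_def Collect_conj_eq Int_commute)
    finally show ?thesis .
  qed
  have intI: "integrable M (\<lambda>\<omega>. if X 0 \<omega> \<le> x then 1 else 0::real)" for x
    by (rule integrable_const_bound[where B=1]) (use rv in auto)
  have EZ0: "expectation (\<lambda>\<omega>. phi t s (X 0 \<omega>)) = F t - F s"
    unfolding phi_def using intI by (simp add: Eind)
  have EZ: "expectation (Z j) = F t - F s" for j
    unfolding Z_def using Eid[OF phi_meas[of t s], of j] EZ0 by simp
  have EZ2: "expectation (\<lambda>\<omega>. (Z j \<omega>)\<^sup>2) \<le> p" for j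
  proof -
    have "expectation (\<lambda>\<omega>. (Z j \<omega>)\<^sup>2) = expectation (\<lambda>\<omega>. sgn (t - s) * Z j \<omega>)"
      unfolding Z_def phi_sq by simp
    also have "\<dots> = sgn (t - s) * (F t - F s)" using EZ[of j] by simp
    also have "\<dots> \<le> \<bar>F t - F s\<bar>"
    proof -
      have "F s \<le> F t" if "s \<le> t" using that unfolding F_def
        by (intro finite_measure_mono) (use rv in auto)
      moreover have "F t \<le> F s" if "t \<le> s" using that unfolding F_def
        by (intro finite_measure_mono) (use rv in auto)
      ultimately show ?thesis by (cases "s < t"; cases "t < s") (auto simp: sgn_if)
    qed
    finally show ?thesis using Fp by linarith
  qed
  have indZ: "indep_vars (\<lambda>_. borel) Z {..<N}"
    unfolding Z_def
    by (rule indep_vars_compose2[OF indep_vars_subset[OF indep]]) auto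
  have "prob {\<omega> \<in> space M. \<bar>(\<Sum>j\<in>{..<N}. Z j \<omega>) - (\<Sum>j\<in>{..<N}. expectation (Z j))\<bar> \<ge> \<epsilon>}
          \<le> 2 * exp (- \<epsilon>\<^sup>2 / (4 * real (card {..<N}) * p))"
  proof (rule chernoff_abs_opt[OF _ _ indZ])
    show "{..<N} \<noteq> {}" using N by (metis lessThan_iff empty_iff less_le_trans zero_less_one)
    show "\<And>i \<omega>. \<bar>Z i \<omega>\<bar> \<le> 1" by (simp add: Z_def phi_abs)
    show "\<epsilon> \<le> 2 * real (card {..<N}) * p" using eps by simp
  qed (use p eps EZ2 in auto)
  moreover have "{\<omega> \<in> space M. \<bar>(\<Sum>j\<in>{..<N}. Z j \<omega>) - (\<Sum>j\<in>{..<N}. expectation (Z j))\<bar> \<ge> \<epsilon>}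
     = {\<omega> \<in> space M. \<bar>real (count_le X N t \<omega>) - real (count_le X N s \<omega>) - real N * (F t - F s)\<bar> \<ge> \<epsilon>}"
    by (simp add: EZ count_phi Z_def)
  ultimately show ?thesis by simp
qed

lemma prob_count_bound:
  fixes X :: "nat \<Rightarrow> 'a \<Rightarrow> real" and M :: "'a measure"
  assumes ps: "prob_space M"
    and rv: "\<And>i. X i \<in> borel_measurable M"
    and indep: "prob_space.indep_vars M (\<lambda>_. borel) X UNIV"
    and ident: "\<And>i. distr M borel (X i) = distr M borel (X 0)"
    and F_def: "\<And>x. F x = measure M {\<omega> \<in> space M. X 0 \<omega> \<le> x}"
    and N: "N \<ge> 1" and eps: "\<epsilon> > 0" "\<epsilon> \<le> 2 * real N"
  shows "measure M {\<omega> \<in> space M. \<bar>real (count_le X N t \<omega>) - real N * F t\<bar> \<ge> \<epsilon>}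
          \<le> 2 * exp (- \<epsilon>\<^sup>2 / (4 * real N))"
proof -
  interpret prob_space M by (rule ps)
  define \<psi> where "\<psi> x = (if x \<le> t then 1 else 0::real)" for x
  have psim[measurable]: "\<psi> \<in> borel_measurable borel" unfolding \<psi>_def by measurable
  have Eind: "expectation (\<lambda>\<omega>. \<psi> (X 0 \<omega>)) = F t"
  proof -
    have "expectation (\<lambda>\<omega>. \<psi> (X 0 \<omega>)) = expectation (indicator {\<omega> \<in> space M. X 0 \<omega> \<le> t})"
      by (intro Bochner_Integration.integral_cong) (auto simp: indicator_def \<psi>_def)
    also have "\<dots> = F t" by (simp add: integral_indicator F_def Collect_conj_eq Int_commute)
    finally show ?thesis .
  qed
  have var: "expectation (\<lambda>\<omega>. (\<psi> (X 0 \<omega>))\<^sup>2) \<le> 1"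
  proof -
    have "expectation (\<lambda>\<omega>. (\<psi> (X 0 \<omega>))\<^sup>2) = expectation (\<lambda>\<omega>. \<psi> (X 0 \<omega>))"
      by (intro Bochner_Integration.integral_cong) (auto simp: \<psi>_def)
    also have "\<dots> \<le> 1" using Eind F_def by simp
    finally show ?thesis .
  qed
  have "measure M {\<omega> \<in> space M. \<bar>(\<Sum>j<N. \<psi> (X j \<omega>)) - real N * expectation (\<lambda>\<omega>. \<psi> (X 0 \<omega>))\<bar> \<ge> \<epsilon>}
          \<le> 2 * exp (- \<epsilon>\<^sup>2 / (4 * real N * 1))"
    by (rule prob_dev_gen[OF ps rv indep ident psim _ N _ var eps(1)]) (use eps in \<open>auto simp: \<psi>_def\<close>)
  moreover have "(\<Sum>j<N. \<psi> (X j \<omega>)) = real (count_le X N t \<omega>)" for \<omega>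
    by (simp add: count_le_def card_sum_if \<psi>_def)
  ultimately show ?thesis by (simp add: Eind)
qed

lemma mvt_open:
  fixes H h :: "real \<Rightarrow> real"
  assumes der: "\<And>x. x \<in> {a<..<b} \<Longrightarrow> (H has_real_derivative h x) (at x)"
    and st: "a < s" "s < t" "t < b"
  shows "\<exists>z. s < z \<and> z < t \<and> H t - H s = (t - s) * h z"
  using MVT2[of s t H h] der st by auto

lemma lip_taylor:
  fixes H h :: "real \<Rightarrow> real"
  assumes der: "\<And>x. x \<in> {a<..<b} \<Longrightarrow> (H has_real_derivative h x) (at x)"
    and lip: "\<And>x y. x \<in> {a<..<b} \<Longrightarrow> y \<in> {a<..<b} \<Longrightarrow> \<bar>h x - h y\<bar> \<le> L * \<bar>x - y\<bar>"
    and L: "L \<ge> 0" and x0: "x0 \<in> {a<..<b}" and x: "x \<in> {a<..<b}"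
  shows "\<bar>H x - H x0 - h x0 * (x - x0)\<bar> \<le> L * (x - x0)\<^sup>2"
proof -
  consider "x = x0" | "x0 < x" | "x < x0" by linarith
  then show ?thesis
  proof cases
    case 1 then show ?thesis by simp
  next
    case 2
    obtain z where z: "x0 < z" "z < x" "H x - H x0 = (x - x0) * h z"
      using mvt_open[where s=x0 and t=x, OF der] x0 x 2 by auto
    have zi: "z \<in> {a<..<b}" using z x0 x by auto
    have "\<bar>H x - H x0 - h x0 * (x - x0)\<bar> = \<bar>x - x0\<bar> * \<bar>h z - h x0\<bar>"
      by (simp add: z(3) abs_mult[symmetric] algebra_simps)
    also have "\<dots> \<le> \<bar>x - x0\<bar> * (L * \<bar>z - x0\<bar>)"
      using lip[OF zi x0] by (intro mult_left_mono) auto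
    also have "\<dots> \<le> \<bar>x - x0\<bar> * (L * \<bar>x - x0\<bar>)"
      using z L by (intro mult_left_mono) auto
    finally show ?thesis by (simp add: power2_eq_square algebra_simps)
  next
    case 3
    obtain z where z: "x < z" "z < x0" "H x0 - H x = (x0 - x) * h z"
      using mvt_open[where s=x and t=x0, OF der] x0 x 3 by auto
    have zi: "z \<in> {a<..<b}" using z x0 x by auto
    have "\<bar>H x - H x0 - h x0 * (x - x0)\<bar> = \<bar>x - x0\<bar> * \<bar>h z - h x0\<bar>"
    proof -
      have "H x - H x0 - h x0 * (x - x0) = (x - x0) * (h z - h x0)"
        using z(3) by (simp add: algebra_simps)
      thus ?thesis by (simp add: abs_mult)
    qed
    also have "\<dots> \<le> \<bar>x - x0\<bar> * (L * \<bar>z - x0\<bar>)"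
      using lip[OF zi x0] by (intro mult_left_mono) auto
    also have "\<dots> \<le> \<bar>x - x0\<bar> * (L * \<bar>x - x0\<bar>)"
      using z L by (intro mult_left_mono) auto
    finally show ?thesis by (simp add: power2_eq_square algebra_simps)
  qed
qed

lemma lip_increment:
  fixes H h :: "real \<Rightarrow> real"
  assumes der: "\<And>x. x \<in> {a<..<b} \<Longrightarrow> (H has_real_derivative h x) (at x)"
    and lip: "\<And>x y. x \<in> {a<..<b} \<Longrightarrow> y \<in> {a<..<b} \<Longrightarrow> \<bar>h x - h y\<bar> \<le> L * \<bar>x - y\<bar>"
    and L: "L \<ge> 0" and x0: "x0 \<in> {a<..<b}" and st: "a < s" "s \<le> t" "t < b"
  shows "\<bar>H t - H s\<bar> \<le> (\<bar>h x0\<bar> + L * (b - a)) * (t - s)"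
proof (cases "s = t")
  case True then show ?thesis by simp
next
  case False
  obtain z where z: "s < z" "z < t" "H t - H s = (t - s) * h z"
    using mvt_open[where s=s and t=t, OF der] st False by auto
  have zi: "z \<in> {a<..<b}" using z st by auto
  have "\<bar>z - x0\<bar> \<le> b - a" using zi x0 by auto
  hence "\<bar>h z\<bar> \<le> \<bar>h x0\<bar> + L * (b - a)"
    using lip[OF zi x0] mult_left_mono[of "\<bar>z - x0\<bar>" "b - a" L] L by linarith
  hence "\<bar>t - s\<bar> * \<bar>h z\<bar> \<le> (t - s) * (\<bar>h x0\<bar> + L * (b - a))"
    using st by (simp add: mult_left_mono)
  then show ?thesis using z(3) st by (simp add: abs_mult mult.commute)
qed

lemma quantile_value:
  fixes X0 :: "'a \<Rightarrow> real" and F :: "real \<Rightarrow> real"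
  assumes ps: "prob_space M" and rv: "X0 \<in> borel_measurable M"
    and F_def: "\<And>x. F x = measure M {\<omega> \<in> space M. X0 \<omega> \<le> x}"
    and \<alpha>: "0 < \<alpha>" "\<alpha> < 1"
    and cont: "isCont F (quantile F \<alpha>)"
  shows "F (quantile F \<alpha>) = \<alpha>"
proof -
  interpret prob_space M by (rule ps)
  define D where "D = distr M borel X0"
  interpret D: real_distribution D unfolding D_def using rv by simp
  have Fc: "F = cdf D"
  proof
    fix x
    have "cdf D x = measure M (X0 -` {..x} \<inter> space M)"
      unfolding cdf_def2 D_def using rv by (simp add: measure_distr)
    also have "X0 -` {..x} \<inter> space M = {\<omega> \<in> space M. X0 \<omega> \<le> x}" by auto
    finally show "F x = cdf D x" by (simp add: F_def)
  qed
  have mono: "F x \<le> F y" if "x \<le> y" for x y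
    unfolding Fc using that by (rule D.cdf_nondecreasing)
  have top: "(F \<longlongrightarrow> 1) at_top" unfolding Fc by (rule D.cdf_lim_at_top_prob)
  have bot: "(F \<longlongrightarrow> 0) at_bot" unfolding Fc by (rule D.cdf_lim_at_bot)
  have "eventually (\<lambda>x. F x > \<alpha>) at_top"
    using order_tendstoD(1)[OF top] \<alpha> by auto
  then obtain x0 where x0: "F x0 > \<alpha>" by (auto simp: eventually_at_top_linorder)
  have "eventually (\<lambda>x. F x < \<alpha>) at_bot"
    using order_tendstoD(2)[OF bot] \<alpha> by auto
  then obtain b where b: "\<And>x. x \<le> b \<Longrightarrow> F x < \<alpha>" by (auto simp: eventually_at_bot_linorder)
  define S where "S = {x. \<alpha> \<le> F x}"
  have ne: "S \<noteq> {}" using x0 unfolding S_def by (metis less_eq_real_def mem_Collect_eq empty_iff)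
  have bdd: "bdd_below S"
  proof (rule bdd_belowI)
    fix x assume "x \<in> S"
    thus "b \<le> x" using b[of x] by (force simp: S_def)
  qed
  define \<xi> where "\<xi> = quantile F \<alpha>"
  have \<xi>S: "\<xi> = Inf S" by (simp add: \<xi>_def quantile_def S_def)
  have below: "F x < \<alpha>" if "x < \<xi>" for x
  proof (rule ccontr)
    assume "\<not> F x < \<alpha>"
    hence "x \<in> S" by (simp add: S_def)
    hence "\<xi> \<le> x" using cInf_lower[OF _ bdd] \<xi>S by simp
    with that show False by simp
  qed
  have above: "F x \<ge> \<alpha>" if "x > \<xi>" for x
  proof -
    have "Inf S < x" using that \<xi>S by simp
    then obtain s where "s \<in> S" "s < x" using cInf_less_iff[OF ne bdd] by auto
    thus ?thesis using mono[of s x] by (simp add: S_def)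
  qed
  from cont have lim: "\<forall>r>0. \<exists>s>0. \<forall>x. x \<noteq> \<xi> \<and> norm (x - \<xi>) < s \<longrightarrow> norm (F x - F \<xi>) < r"
    unfolding isCont_def LIM_eq \<xi>_def by simp
  show ?thesis unfolding \<xi>_def[symmetric]
  proof (rule ccontr)
    assume ne: "F \<xi> \<noteq> \<alpha>"
    then obtain s where s: "s > 0" and sx: "\<And>x. x \<noteq> \<xi> \<Longrightarrow> \<bar>x - \<xi>\<bar> < s \<Longrightarrow> \<bar>F x - F \<xi>\<bar> < \<bar>F \<xi> - \<alpha>\<bar>"
      using lim[rule_format, of "\<bar>F \<xi> - \<alpha>\<bar>"] by auto
    show False
    proof (cases "F \<xi> < \<alpha>")
      case True
      have "\<bar>F (\<xi> + s/2) - F \<xi>\<bar> < \<bar>F \<xi> - \<alpha>\<bar>" using sx[of "\<xi> + s/2"] s by auto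
      moreover have "F (\<xi> + s/2) \<ge> \<alpha>" using above s by simp
      ultimately show False using True by linarith
    next
      case False
      have "\<bar>F (\<xi> - s/2) - F \<xi>\<bar> < \<bar>F \<xi> - \<alpha>\<bar>" using sx[of "\<xi> - s/2"] s by auto
      moreover have "F (\<xi> - s/2) < \<alpha>" using below s by simp
      ultimately show False using False ne by linarith
    qed
  qed
qed

lemma interp:
  fixes cnt :: "real \<Rightarrow> nat" and N :: nat
  assumes N: "N \<ge> 1" and r: "r > 0"
    and mono: "\<And>s t. s \<le> t \<Longrightarrow> cnt s \<le> cnt t"
    and Finc: "\<And>s t. \<bar>s - \<xi>\<bar> \<le> r \<Longrightarrow> \<bar>t - \<xi>\<bar> \<le> r \<Longrightarrow> s \<le> t \<Longrightarrow> F t - F s \<le> Mf * (t - s)"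
    and grid: "\<And>j. -int N \<le> j \<Longrightarrow> j \<le> int N \<Longrightarrow>
        \<bar>real (cnt (\<xi> + real_of_int j * r / real N)) - real (cnt \<xi>) - real N * (F (\<xi> + real_of_int j * r / real N) - \<alpha>)\<bar> \<le> D"
    and t: "\<bar>t - \<xi>\<bar> \<le> r" and Mf: "Mf \<ge> 0"
  shows "\<bar>real (cnt t) - real (cnt \<xi>) - real N * (F t - \<alpha>)\<bar> \<le> D + Mf * r"
proof -
  have Npos: "real N > 0" using N by simp
  define y where "y = (t - \<xi>) * real N / r"
  define j where "j = min \<lfloor>y\<rfloor> (int N - 1)"
  have y: "- real N \<le> y" "y \<le> real N"
  proof -
    have "\<bar>t - \<xi>\<bar> / r \<le> 1" using t r by simp
    hence "\<bar>t - \<xi>\<bar> / r * real N \<le> 1 * real N" by (intro mult_right_mono) auto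
    moreover have "\<bar>y\<bar> = \<bar>t - \<xi>\<bar> / r * real N" using r by (simp add: y_def abs_mult abs_divide)
    ultimately show "- real N \<le> y" "y \<le> real N" by (simp_all add: abs_le_iff)
  qed
  have "- int N \<le> \<lfloor>y\<rfloor>" using y(1) by (simp add: le_floor_iff)
  hence j1: "- int N \<le> j" using N by (simp add: j_def)
  have j2: "j + 1 \<le> int N" by (simp add: j_def)
  define tj where "tj i = \<xi> + real_of_int i * r / real N" for i
  have tj_step: "tj (j + 1) - tj j = r / real N" by (simp add: tj_def algebra_simps add_divide_distrib)
  have le1: "tj j \<le> t"
  proof -
    have "real_of_int j \<le> y" using j_def by (simp add: j_def) linarith
    hence "real_of_int j * r / real N \<le> y * r / real N" using r Npos by (simp add: divide_right_mono)
    also have "y * r / real N = t - \<xi>" using r Npos by (simp add: y_def field_simps)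
    finally show ?thesis by (simp add: tj_def)
  qed
  have le2: "t \<le> tj (j + 1)"
  proof (cases "\<lfloor>y\<rfloor> \<le> int N - 1")
    case True
    hence jj: "j = \<lfloor>y\<rfloor>" by (simp add: j_def)
    have "y \<le> real_of_int (j + 1)" unfolding jj by linarith
    hence "y * r / real N \<le> real_of_int (j + 1) * r / real N" using r Npos by (simp add: divide_right_mono)
    moreover have "y * r / real N = t - \<xi>" using r Npos by (simp add: y_def field_simps)
    ultimately show ?thesis by (simp add: tj_def)
  next
    case False
    hence "j + 1 = int N" by (simp add: j_def)
    hence "tj (j + 1) = \<xi> + r" using Npos by (simp add: tj_def)
    thus ?thesis using t by (simp add: abs_le_iff)
  qed
  have inr: "\<bar>tj i - \<xi>\<bar> \<le> r" if "- int N \<le> i" "i \<le> int N" for i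
  proof -
    have "\<bar>real_of_int i\<bar> \<le> real N" using that by linarith
    hence "\<bar>real_of_int i\<bar> * r / real N \<le> real N * r / real N" using r Npos
      by (intro divide_right_mono mult_right_mono) auto
    thus ?thesis using Npos r by (simp add: tj_def abs_mult abs_divide)
  qed
  have ia: "\<bar>tj j - \<xi>\<bar> \<le> r" using inr j1 j2 by simp
  have ib: "\<bar>tj (j+1) - \<xi>\<bar> \<le> r" using inr j1 j2 by simp
  have ga: "\<bar>real (cnt (tj j)) - real (cnt \<xi>) - real N * (F (tj j) - \<alpha>)\<bar> \<le> D"
    using grid[of j] j1 j2 by (simp add: tj_def)
  have gb: "\<bar>real (cnt (tj (j+1))) - real (cnt \<xi>) - real N * (F (tj (j+1)) - \<alpha>)\<bar> \<le> D"
    using grid[of "j+1"] j1 j2 by (simp add: tj_def)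
  have ca: "real (cnt (tj j)) \<le> real (cnt t)" using mono[OF le1] by simp
  have cb: "real (cnt t) \<le> real (cnt (tj (j+1)))" using mono[OF le2] by simp
  have d1: "t - tj j \<le> r / real N" using le2 tj_step by linarith
  have d2: "tj (j+1) - t \<le> r / real N" using le1 tj_step by linarith
  have fa: "F t - F (tj j) \<le> Mf * (r / real N)"
    using Finc[OF ia t le1] mult_left_mono[OF d1 Mf] by linarith
  have fb: "F (tj (j+1)) - F t \<le> Mf * (r / real N)"
    using Finc[OF t ib le2] mult_left_mono[OF d2 Mf] by linarith
  have NM: "real N * (Mf * (r / real N)) = Mf * r" using Npos by simp
  have fa': "real N * (F t - F (tj j)) \<le> Mf * r"
    using mult_left_mono[OF fa, of "real N"] NM by simp
  have fb': "real N * (F (tj (j+1)) - F t) \<le> Mf * r"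
    using mult_left_mono[OF fb, of "real N"] NM by simp
  have up: "real (cnt t) - real (cnt \<xi>) - real N * (F t - \<alpha>) \<le> D + Mf * r"
    using cb gb fb' by (simp add: abs_le_iff algebra_simps)
  have lo: "real (cnt t) - real (cnt \<xi>) - real N * (F t - \<alpha>) \<ge> - (D + Mf * r)"
    using ca ga fa' by (simp add: abs_le_iff algebra_simps)
  show ?thesis using up lo by (simp add: abs_le_iff)
qed

lemma final_alg:
  fixes n q B Ck K A1 Mf Lf Lg f0 g0 a b CS r \<eta> D2 :: real
  assumes n: "n \<ge> 1" and q: "0 < q" "q \<le> 1" and nq: "1 / n \<le> q ^ 4"
    and pos: "B \<ge> 0" "Ck \<ge> 0" "K \<ge> 0" "A1 \<ge> 0" "Mf \<ge> 0" "Lf \<ge> 0" "Lg \<ge> 0" "f0 > 0"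
    and a: "\<bar>a\<bar> \<le> B * n * q\<^sup>2" and b: "\<bar>b\<bar> \<le> Ck"
    and det: "\<bar>CS + g0 / (n * f0) * \<bar>a - b\<bar> * (\<bar>a - b\<bar> + 1) / 2\<bar> \<le> (\<bar>a - b\<bar> + 1) * (\<bar>g0\<bar> * \<eta> + Lg * r\<^sup>2)"
    and r: "r = K * q\<^sup>2" and eta: "\<eta> = (Lf * r\<^sup>2 + (D2 + 1) / n) / f0" and D2: "D2 = A1 * n * q ^ 3 + Mf * r"
  shows "\<bar>CS / n - (- a\<^sup>2 / (2 * n\<^sup>2) * (g0 / f0))\<bar>
     \<le> ((B + Ck + 1) * (\<bar>g0\<bar> * (Lf * K\<^sup>2 + A1 + Mf * K + 1) / f0 + Lg * K\<^sup>2)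
         + \<bar>g0\<bar> / (2 * f0) * (2 * B * Ck + Ck\<^sup>2 + B + Ck) + 1) * q ^ 5"
proof -
  define d where "d = \<bar>a - b\<bar>"
  define E' where "E' = \<bar>g0\<bar> * \<eta> + Lg * r\<^sup>2"
  define P where "P = \<bar>g0\<bar> * (Lf * K\<^sup>2 + A1 + Mf * K + 1) / f0 + Lg * K\<^sup>2"
  define X where "X = CS + g0 / (n * f0) * d * (d + 1) / 2"
  have npos: "n > 0" using n by simp
  have q43: "q ^ 4 \<le> q ^ 3" and q54: "q^5 \<le> q^4" and q65: "q^6 \<le> q^5" and q32: "q^3 \<le> q^2"
    using q by (simp_all add: power_decreasing)
  have q0: "0 \<le> q ^ k" for k using q by simp
  have Xb: "\<bar>X\<bar> \<le> (d + 1) * E'" using det by (simp add: X_def d_def E'_def)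
  have split: "CS / n - (- a\<^sup>2 / (2 * n\<^sup>2) * (g0 / f0)) = X / n + (g0 / f0) / (2 * n\<^sup>2) * (a\<^sup>2 - d\<^sup>2 - d)"
  proof -
    have "d\<^sup>2 = (a - b)\<^sup>2" by (simp add: d_def)
    thus ?thesis using npos pos by (simp add: X_def field_simps power2_eq_square)
  qed
  have e1: "Lf * r\<^sup>2 \<le> Lf * K\<^sup>2 * q ^ 3"
  proof -
    have "Lf * r\<^sup>2 = Lf * K\<^sup>2 * q ^ 4" by (simp add: r power_mult_distrib flip: power_mult)
    also have "\<dots> \<le> Lf * K\<^sup>2 * q ^ 3" using q43 pos by (intro mult_left_mono) auto
    finally show ?thesis .
  qed
  have e2: "(D2 + 1) / n \<le> (A1 + Mf * K + 1) * q ^ 3"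
  proof -
    have "(D2 + 1) / n = A1 * q ^ 3 + Mf * K * q\<^sup>2 * (1 / n) + 1 / n"
      using npos by (simp add: D2 r field_simps)
    also have "\<dots> \<le> A1 * q ^ 3 + Mf * K * q\<^sup>2 * q ^ 4 + q ^ 4"
      using nq pos q by (intro add_mono mult_left_mono) auto
    also have "Mf * K * q\<^sup>2 * q ^ 4 = Mf * K * q ^ 6" by (simp add: power_add[symmetric] mult.assoc)
    also have "A1 * q ^ 3 + Mf * K * q ^ 6 + q ^ 4 \<le> A1 * q ^ 3 + Mf * K * q ^ 3 + q ^ 3"
      using q65 q54 q43 pos by (intro add_mono mult_left_mono order_refl) (auto intro: order_trans)
    finally show ?thesis by (simp add: algebra_simps)
  qed
  have etab: "\<eta> \<le> (Lf * K\<^sup>2 + A1 + Mf * K + 1) * q ^ 3 / f0"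
    using e1 e2 pos by (simp add: eta divide_right_mono algebra_simps)
  have e3: "Lg * r\<^sup>2 \<le> Lg * K\<^sup>2 * q ^ 3"
  proof -
    have "Lg * r\<^sup>2 = Lg * K\<^sup>2 * q ^ 4" by (simp add: r power_mult_distrib flip: power_mult)
    also have "\<dots> \<le> Lg * K\<^sup>2 * q ^ 3" using q43 pos by (intro mult_left_mono) auto
    finally show ?thesis .
  qed
  have Eb: "E' \<le> P * q ^ 3"
  proof -
    have "\<bar>g0\<bar> * \<eta> \<le> \<bar>g0\<bar> * ((Lf * K\<^sup>2 + A1 + Mf * K + 1) * q ^ 3 / f0)"
      using etab by (intro mult_left_mono) auto
    thus ?thesis using e3 by (simp add: E'_def P_def algebra_simps)
  qed
  have E0: "E' \<ge> 0"
  proof -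
    have "\<eta> \<ge> 0" using pos npos D2 q unfolding eta r by (intro divide_nonneg_pos add_nonneg_nonneg mult_nonneg_nonneg) auto
    thus ?thesis unfolding E'_def using pos by simp
  qed
  have d1: "d + 1 \<le> B * n * q\<^sup>2 + Ck + 1" using a b by (simp add: d_def)
  have dn: "(d + 1) / n \<le> (B + Ck + 1) * q\<^sup>2"
  proof -
    have "(d + 1) / n \<le> (B * n * q\<^sup>2 + Ck + 1) / n" using d1 npos by (simp add: divide_right_mono)
    also have "\<dots> = B * q\<^sup>2 + (Ck + 1) * (1 / n)" using npos by (simp add: field_simps)
    also have "\<dots> \<le> B * q\<^sup>2 + (Ck + 1) * q ^ 4" using nq pos by (intro add_mono mult_left_mono) auto
    also have "\<dots> \<le> B * q\<^sup>2 + (Ck + 1) * q\<^sup>2"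
      using q43 q32 pos by (intro add_mono mult_left_mono) auto
    finally show ?thesis by (simp add: algebra_simps)
  qed
  have T1: "\<bar>X / n\<bar> \<le> (B + Ck + 1) * P * q ^ 5"
  proof -
    have "\<bar>X / n\<bar> \<le> (d + 1) * E' / n" using Xb npos by (simp add: abs_divide divide_right_mono)
    also have "\<dots> = ((d + 1) / n) * E'" by simp
    also have "\<dots> \<le> ((B + Ck + 1) * q\<^sup>2) * (P * q ^ 3)"
      using dn Eb E0 pos q by (intro mult_mono) (auto simp: d_def)
    also have "\<dots> = (B + Ck + 1) * P * q ^ 5" by (simp add: power_add[symmetric] algebra_simps)
    finally show ?thesis .
  qed
  have ad: "\<bar>a\<^sup>2 - d\<^sup>2 - d\<bar> \<le> 2 * \<bar>a\<bar> * Ck + Ck\<^sup>2 + \<bar>a\<bar> + Ck"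
  proof -
    have "a\<^sup>2 - d\<^sup>2 = 2 * a * b - b\<^sup>2" by (simp add: d_def power2_eq_square algebra_simps)
    moreover have "\<bar>2 * a * b - b\<^sup>2\<bar> \<le> \<bar>2 * a * b\<bar> + \<bar>b\<^sup>2\<bar>" by (rule abs_triangle_ineq4)
    ultimately have "\<bar>a\<^sup>2 - d\<^sup>2\<bar> \<le> 2 * \<bar>a\<bar> * \<bar>b\<bar> + \<bar>b\<bar>\<^sup>2" by (simp add: abs_mult)
    also have "\<dots> \<le> 2 * \<bar>a\<bar> * Ck + Ck\<^sup>2" using b by (intro add_mono mult_left_mono power_mono) auto
    finally have "\<bar>a\<^sup>2 - d\<^sup>2\<bar> \<le> 2 * \<bar>a\<bar> * Ck + Ck\<^sup>2" .
    moreover have "d \<le> \<bar>a\<bar> + Ck" using b by (simp add: d_def)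
    moreover have "d \<ge> 0" by (simp add: d_def)
    ultimately show ?thesis by linarith
  qed
  have ad2: "2 * \<bar>a\<bar> * Ck + Ck\<^sup>2 + \<bar>a\<bar> + Ck \<le> (2 * B * Ck + B) * n * q\<^sup>2 + (Ck\<^sup>2 + Ck)"
  proof -
    have "2 * \<bar>a\<bar> * Ck \<le> 2 * (B * n * q\<^sup>2) * Ck" using a pos by (intro mult_right_mono) auto
    thus ?thesis using a by (simp add: algebra_simps)
  qed
  have nn: "1 / n\<^sup>2 \<le> q ^ 8"
  proof -
    have "1 / n\<^sup>2 = (1 / n)\<^sup>2" by (simp add: power_divide)
    also have "\<dots> \<le> (q ^ 4)\<^sup>2" using nq npos by (intro power_mono) auto
    finally show ?thesis by (simp flip: power_mult)
  qed
  have T2': "(2 * \<bar>a\<bar> * Ck + Ck\<^sup>2 + \<bar>a\<bar> + Ck) / n\<^sup>2 \<le> (2 * B * Ck + B + Ck\<^sup>2 + Ck) * q ^ 5"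
  proof -
    have "(2 * \<bar>a\<bar> * Ck + Ck\<^sup>2 + \<bar>a\<bar> + Ck) / n\<^sup>2 \<le> ((2 * B * Ck + B) * n * q\<^sup>2 + (Ck\<^sup>2 + Ck)) / n\<^sup>2"
      using ad2 npos by (simp add: divide_right_mono)
    also have "\<dots> = (2 * B * Ck + B) * q\<^sup>2 * (1 / n) + (Ck\<^sup>2 + Ck) * (1 / n\<^sup>2)"
      using npos by (simp add: field_simps power2_eq_square)
    also have "\<dots> \<le> (2 * B * Ck + B) * q\<^sup>2 * q ^ 4 + (Ck\<^sup>2 + Ck) * q ^ 8"
      using nq nn pos q by (intro add_mono mult_left_mono) auto
    also have "\<dots> = (2 * B * Ck + B) * q ^ 6 + (Ck\<^sup>2 + Ck) * q ^ 8"
      by (simp add: power_add[symmetric] mult.assoc)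
    also have "\<dots> \<le> (2 * B * Ck + B) * q ^ 5 + (Ck\<^sup>2 + Ck) * q ^ 5"
    proof -
      have "q ^ 8 \<le> q ^ 5" using q by (simp add: power_decreasing)
      thus ?thesis using q65 pos by (intro add_mono mult_left_mono) auto
    qed
    finally show ?thesis by (simp add: algebra_simps)
  qed
  have T2: "\<bar>(g0 / f0) / (2 * n\<^sup>2) * (a\<^sup>2 - d\<^sup>2 - d)\<bar> \<le> \<bar>g0\<bar> / (2 * f0) * (2 * B * Ck + Ck\<^sup>2 + B + Ck) * q ^ 5"
  proof -
    have "\<bar>(g0 / f0) / (2 * n\<^sup>2) * (a\<^sup>2 - d\<^sup>2 - d)\<bar> = \<bar>g0\<bar> / (2 * f0) * (\<bar>a\<^sup>2 - d\<^sup>2 - d\<bar> / n\<^sup>2)"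
      using pos npos by (simp add: abs_mult abs_divide)
    also have "\<dots> \<le> \<bar>g0\<bar> / (2 * f0) * ((2 * B * Ck + B + Ck\<^sup>2 + Ck) * q ^ 5)"
    proof (rule mult_left_mono)
      show "\<bar>a\<^sup>2 - d\<^sup>2 - d\<bar> / n\<^sup>2 \<le> (2 * B * Ck + B + Ck\<^sup>2 + Ck) * q ^ 5"
        using ad T2' npos by (meson divide_right_mono order_trans zero_le_power2)
    qed (use pos in auto)
    finally show ?thesis by (simp add: algebra_simps)
  qed
  have "\<bar>CS / n - (- a\<^sup>2 / (2 * n\<^sup>2) * (g0 / f0))\<bar> \<le> \<bar>X / n\<bar> + \<bar>(g0 / f0) / (2 * n\<^sup>2) * (a\<^sup>2 - d\<^sup>2 - d)\<bar>"
    unfolding split by (rule abs_triangle_ineq)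
  also have "\<dots> \<le> (B + Ck + 1) * P * q ^ 5 + \<bar>g0\<bar> / (2 * f0) * (2 * B * Ck + Ck\<^sup>2 + B + Ck) * q ^ 5 + q ^ 5"
    using T1 T2 q0[of 5] by linarith
  finally show ?thesis by (simp add: P_def algebra_simps)
qed

lemma rng_alg:
  fixes n q B Ck K A1 Mf Lf f0 a b r \<eta> D2 :: real
  assumes n: "n \<ge> 1" and q: "0 < q" "q \<le> 1" and nq: "1 / n \<le> q ^ 4"
    and pos: "B \<ge> 0" "Ck \<ge> 0" "A1 \<ge> 0" "Mf \<ge> 0" "Lf \<ge> 0" "f0 > 0"
    and K: "K = (B + 1) / f0"
    and a: "\<bar>a\<bar> \<le> B * n * q\<^sup>2" and b: "\<bar>b\<bar> \<le> Ck"
    and small: "q * (A1 + (Ck + Lf * K\<^sup>2 + Mf * K + 1)) \<le> 1"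
    and r: "r = K * q\<^sup>2" and eta: "\<eta> = (Lf * r\<^sup>2 + (D2 + 1) / n) / f0" and D2: "D2 = A1 * n * q ^ 3 + Mf * r"
  shows "\<bar>a - b\<bar> / (n * f0) + \<eta> \<le> r"
proof -
  have npos: "n > 0" using n by simp
  have K0: "K \<ge> 0" using K pos by simp
  have q43: "q ^ 4 \<le> q ^ 3" and q32: "q^3 \<le> q^2" and q64: "q^6 \<le> q^4"
    using q by (simp_all add: power_decreasing)
  have t1: "\<bar>a - b\<bar> / n \<le> B * q\<^sup>2 + Ck * q ^ 4"
  proof -
    have "\<bar>a - b\<bar> \<le> B * n * q\<^sup>2 + Ck" using a b by linarith
    hence "\<bar>a - b\<bar> / n \<le> (B * n * q\<^sup>2 + Ck) / n" using npos by (simp add: divide_right_mono)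
    also have "\<dots> = B * q\<^sup>2 + Ck * (1 / n)" using npos by (simp add: field_simps)
    also have "\<dots> \<le> B * q\<^sup>2 + Ck * q ^ 4" using nq pos by (intro add_mono mult_left_mono) auto
    finally show ?thesis .
  qed
  have t2: "Lf * r\<^sup>2 + (D2 + 1) / n \<le> q ^ 3 * (A1 + (Ck + Lf * K\<^sup>2 + Mf * K + 1) * q) - Ck * q ^ 4"
  proof -
    have "Lf * r\<^sup>2 = Lf * K\<^sup>2 * q ^ 4" by (simp add: r power_mult_distrib flip: power_mult)
    moreover have "(D2 + 1) / n = A1 * q ^ 3 + Mf * K * q\<^sup>2 * (1 / n) + 1 / n"
      using npos by (simp add: D2 r field_simps)
    moreover have "Mf * K * q\<^sup>2 * (1 / n) \<le> Mf * K * q ^ 4"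
    proof -
      have "q\<^sup>2 * (1 / n) \<le> q\<^sup>2 * q ^ 4" using nq q by (intro mult_left_mono) auto
      also have "\<dots> = q ^ 6" by (simp flip: power_add)
      finally have "q\<^sup>2 * (1 / n) \<le> q ^ 4" using q64 by linarith
      hence "(Mf * K) * (q\<^sup>2 * (1 / n)) \<le> (Mf * K) * q ^ 4" using pos K0 by (intro mult_left_mono) auto
      thus ?thesis by (simp add: mult.assoc)
    qed
    ultimately have "Lf * r\<^sup>2 + (D2 + 1) / n \<le> Lf * K\<^sup>2 * q ^ 4 + A1 * q ^ 3 + Mf * K * q ^ 4 + q ^ 4"
      using nq by linarith
    also have "\<dots> = q ^ 3 * (A1 + (Ck + Lf * K\<^sup>2 + Mf * K + 1) * q) - Ck * q ^ 4"
      by (simp add: algebra_simps power_Suc[symmetric] numeral_eq_Suc)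
    finally show ?thesis .
  qed
  have t3: "q ^ 3 * (A1 + (Ck + Lf * K\<^sup>2 + Mf * K + 1) * q) \<le> q\<^sup>2"
  proof -
    have "A1 + (Ck + Lf * K\<^sup>2 + Mf * K + 1) * q \<le> A1 + (Ck + Lf * K\<^sup>2 + Mf * K + 1)"
      using q pos K0 by (intro add_left_mono mult_left_le) auto
    hence "q * (A1 + (Ck + Lf * K\<^sup>2 + Mf * K + 1) * q) \<le> 1"
      using small q by (meson mult_left_mono order_trans less_imp_le)
    hence "q\<^sup>2 * (q * (A1 + (Ck + Lf * K\<^sup>2 + Mf * K + 1) * q)) \<le> q\<^sup>2 * 1"
      by (intro mult_left_mono) auto
    thus ?thesis by (simp add: power_numeral_reduce mult.assoc)
  qed
  have "\<bar>a - b\<bar> / (n * f0) + \<eta> = (\<bar>a - b\<bar> / n + (Lf * r\<^sup>2 + (D2 + 1) / n)) / f0"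
    using pos npos by (simp add: eta field_simps)
  also have "\<dots> \<le> (B * q\<^sup>2 + q\<^sup>2) / f0"
    using t1 t2 t3 pos by (intro divide_right_mono) auto
  also have "\<dots> = r" using pos by (simp add: r K field_simps)
  finally show ?thesis .
qed

theorem lemma3p2:
  fixes M :: "'a measure" and X :: "nat \<Rightarrow> 'a \<Rightarrow> real"
    and F f G g :: "real \<Rightarrow> real" and \<alpha> :: real and k :: "nat \<Rightarrow> int"
  assumes "prob_space M"
    and rv: "\<And>i. X i \<in> borel_measurable M"
    and indep: "prob_space.indep_vars M (\<lambda>_. borel) X UNIV"
    and ident: "\<And>i. distr M borel (X i) = distr M borel (X 0)"
    and F_def: "\<And>x. F x = measure M {\<omega> \<in> space M. X 0 \<omega> \<le> x}"
    and \<alpha>: "0 < \<alpha>" "\<alpha> < 1"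
    and f_nbhd: "\<exists>\<delta>>0. \<exists>L. \<forall>x\<in>{quantile F \<alpha> - \<delta> <..< quantile F \<alpha> + \<delta>}.
        (F has_real_derivative f x) (at x) \<and> f x > 0 \<and>
        (\<forall>y\<in>{quantile F \<alpha> - \<delta> <..< quantile F \<alpha> + \<delta>}. \<bar>f x - f y\<bar> \<le> L * \<bar>x - y\<bar>)"
    and g_nbhd: "\<exists>\<delta>>0. \<exists>L. \<forall>x\<in>{quantile F \<alpha> - \<delta> <..< quantile F \<alpha> + \<delta>}.
        (G has_real_derivative g x) (at x) \<and>
        (\<forall>y\<in>{quantile F \<alpha> - \<delta> <..< quantile F \<alpha> + \<delta>}. \<bar>g x - g y\<bar> \<le> L * \<bar>x - y\<bar>)"
    and k: "\<exists>C. \<forall>\<^sub>F N in sequentially. \<bar>real_of_int (k N) - \<alpha> * real N\<bar> \<le> C"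
  shows "\<forall>c>0. \<exists>A>0. \<exists>C N0. \<forall>N\<ge>N0. \<exists>E\<in>sets M.
     {\<omega> \<in> space M.
        \<bar>(let \<xi> = quantile F \<alpha>; Na = count_le X N \<xi> \<omega> in
           conv_sum (k N) (int Na) (\<lambda>i. G (order_stat X N \<omega> i) - G \<xi>) / real N
           - ( - (real Na - \<alpha> * real N)\<^sup>2 / (2 * (real N)\<^sup>2) * (g \<xi> / f \<xi>)))\<bar>
        > A * (ln (real N) / real N) powr (5/4)} \<subseteq> E
     \<and> measure M E \<le> C * real N powr (- c)"
proof -
  note ps = assms(1)
  interpret P: prob_space M by (rule ps)
  define \<xi> where "\<xi> = quantile F \<alpha>"
  obtain \<delta>f Lf0 where \<delta>f: "\<delta>f > 0" and fP: "\<And>x. x \<in> {\<xi> - \<delta>f<..<\<xi> + \<delta>f} \<Longrightarrow>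
      (F has_real_derivative f x) (at x) \<and> f x > 0 \<and> (\<forall>y\<in>{\<xi> - \<delta>f<..<\<xi> + \<delta>f}. \<bar>f x - f y\<bar> \<le> Lf0 * \<bar>x - y\<bar>)"
    using f_nbhd unfolding \<xi>_def by blast
  obtain \<delta>g Lg0 where \<delta>g: "\<delta>g > 0" and gP: "\<And>x. x \<in> {\<xi> - \<delta>g<..<\<xi> + \<delta>g} \<Longrightarrow>
      (G has_real_derivative g x) (at x) \<and> (\<forall>y\<in>{\<xi> - \<delta>g<..<\<xi> + \<delta>g}. \<bar>g x - g y\<bar> \<le> Lg0 * \<bar>x - y\<bar>)"
    using g_nbhd unfolding \<xi>_def by blast
  define \<delta> where "\<delta> = min \<delta>f \<delta>g"
  have \<delta>: "\<delta> > 0" using \<delta>f \<delta>g by (simp add: \<delta>_def)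
  define Iv where "Iv = {\<xi> - \<delta><..<\<xi> + \<delta>}"
  have Ivf: "Iv \<subseteq> {\<xi> - \<delta>f<..<\<xi> + \<delta>f}" and Ivg: "Iv \<subseteq> {\<xi> - \<delta>g<..<\<xi> + \<delta>g}"
    by (auto simp: Iv_def \<delta>_def)
  define Lf where "Lf = \<bar>Lf0\<bar>"
  define Lg where "Lg = \<bar>Lg0\<bar>"
  have Lf: "Lf \<ge> 0" and Lg: "Lg \<ge> 0" by (simp_all add: Lf_def Lg_def)
  have derF: "\<And>x. x \<in> Iv \<Longrightarrow> (F has_real_derivative f x) (at x)" using fP Ivf by blast
  have derG: "\<And>x. x \<in> Iv \<Longrightarrow> (G has_real_derivative g x) (at x)" using gP Ivg by blast
  have lipf: "\<bar>f x - f y\<bar> \<le> Lf * \<bar>x - y\<bar>" if "x \<in> Iv" "y \<in> Iv" for x y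
  proof -
    have "\<bar>f x - f y\<bar> \<le> Lf0 * \<bar>x - y\<bar>" using fP[of x] that Ivf by blast
    also have "\<dots> \<le> Lf * \<bar>x - y\<bar>" unfolding Lf_def by (intro mult_right_mono) auto
    finally show ?thesis .
  qed
  have lipg: "\<bar>g x - g y\<bar> \<le> Lg * \<bar>x - y\<bar>" if "x \<in> Iv" "y \<in> Iv" for x y
  proof -
    have "\<bar>g x - g y\<bar> \<le> Lg0 * \<bar>x - y\<bar>" using gP[of x] that Ivg by blast
    also have "\<dots> \<le> Lg * \<bar>x - y\<bar>" unfolding Lg_def by (intro mult_right_mono) auto
    finally show ?thesis .
  qed
  have \<xi>I: "\<xi> \<in> Iv" using \<delta> by (simp add: Iv_def)
  define f0 where "f0 = f \<xi>"
  define g0 where "g0 = g \<xi>"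
  have f0: "f0 > 0" using fP[of \<xi>] \<xi>I Ivf by (auto simp: f0_def)
  have F\<xi>: "F \<xi> = \<alpha>"
    using quantile_value[OF ps rv[of 0] F_def \<alpha>] DERIV_isCont[OF derF[OF \<xi>I]] by (simp add: \<xi>_def)
  have TF: "\<bar>F t - \<alpha> - f0 * (t - \<xi>)\<bar> \<le> Lf * (t - \<xi>)\<^sup>2" if "\<bar>t - \<xi>\<bar> < \<delta>" for t
    using lip_taylor[of "\<xi> - \<delta>" "\<xi> + \<delta>" F f Lf \<xi> t] derF lipf Lf \<xi>I that
    by (simp add: Iv_def F\<xi> f0_def abs_less_iff)
  have TG: "\<bar>G t - G \<xi> - g0 * (t - \<xi>)\<bar> \<le> Lg * (t - \<xi>)\<^sup>2" if "\<bar>t - \<xi>\<bar> < \<delta>" for t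
    using lip_taylor[of "\<xi> - \<delta>" "\<xi> + \<delta>" G g Lg \<xi> t] derG lipg Lg \<xi>I that
    by (simp add: Iv_def g0_def abs_less_iff)
  define Mf where "Mf = f0 + Lf * (2 * \<delta>)"
  have Mf: "Mf > 0" using f0 Lf \<delta> by (simp add: Mf_def add_pos_nonneg)
  have Finc: "F t - F s \<le> Mf * (t - s)" if "\<xi> - \<delta> < s" "s \<le> t" "t < \<xi> + \<delta>" for s t
  proof -
    have "\<bar>F t - F s\<bar> \<le> (\<bar>f \<xi>\<bar> + Lf * ((\<xi> + \<delta>) - (\<xi> - \<delta>))) * (t - s)"
      by (rule lip_increment[of "\<xi> - \<delta>" "\<xi> + \<delta>" F f Lf \<xi> s t]) (use derF lipf Lf \<xi>I that in \<open>auto simp: Iv_def\<close>)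
    thus ?thesis using f0 by (simp add: Mf_def f0_def)
  qed
  have Fdev: "\<bar>F t - \<alpha>\<bar> \<le> Mf * \<bar>t - \<xi>\<bar>" if "\<bar>t - \<xi>\<bar> < \<delta>" for t
  proof (cases "\<xi> \<le> t")
    case True
    have "F t - F \<xi> \<le> Mf * (t - \<xi>)" using Finc[of \<xi> t] that True \<delta> by (auto simp: abs_less_iff)
    moreover have "F \<xi> \<le> F t" unfolding F_def using True by (intro P.finite_measure_mono) (use rv in auto)
    ultimately show ?thesis using True F\<xi> by (simp add: abs_le_iff)
  next
    case False
    have "F \<xi> - F t \<le> Mf * (\<xi> - t)" using Finc[of t \<xi>] that False \<delta> by (auto simp: abs_less_iff)
    moreover have "F t \<le> F \<xi>" unfolding F_def using False by (intro P.finite_measure_mono) (use rv in auto)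
    ultimately show ?thesis using False F\<xi> by (simp add: abs_le_iff)
  qed
  obtain Ck0 N1 where kb0: "\<And>N. N \<ge> N1 \<Longrightarrow> \<bar>real_of_int (k N) - \<alpha> * real N\<bar> \<le> Ck0"
    using k by (auto simp: eventually_sequentially)
  define Ck where "Ck = \<bar>Ck0\<bar>"
  have Ck: "Ck \<ge> 0" by (simp add: Ck_def)
  have kb: "\<And>N. N \<ge> N1 \<Longrightarrow> \<bar>real_of_int (k N) - \<alpha> * real N\<bar> \<le> Ck"
    using kb0 by (force simp: Ck_def)
  have cntmono: "count_le X N s \<omega> \<le> count_le X N t \<omega>" if "s \<le> t" for N s t \<omega>
    unfolding count_le_def by (rule card_mono) (use that in auto)
  have cntle: "count_le X N t \<omega> \<le> N" for N t \<omega>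
  proof -
    have "count_le X N t \<omega> \<le> card {..<N}" unfolding count_le_def by (rule card_mono) auto
    thus ?thesis by simp
  qed
  have cnt_meas[measurable]: "(\<lambda>\<omega>. real (count_le X N t \<omega>)) \<in> borel_measurable M" for N t
  proof -
    have "(\<lambda>\<omega>. real (count_le X N t \<omega>)) = (\<lambda>\<omega>. \<Sum>j<N. if X j \<omega> \<le> t then 1 else 0)"
      by (simp add: count_le_def card_sum_if)
    also have "\<dots> \<in> borel_measurable M" using rv by measurable
    finally show ?thesis .
  qed
  define qf where "qf N = (ln (real N) / real N) powr (1/4)" for N :: nat
  have qlim: "(qf \<longlongrightarrow> 0) sequentially"
  proof -
    have l: "((\<lambda>N. ln (real N) / real N) \<longlongrightarrow> 0) sequentially"
      by (rule filterlim_compose[OF ln_x_over_x_tendsto_0 filterlim_real_sequentially])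
    have ev: "\<forall>\<^sub>F N in sequentially. 0 \<le> ln (real N) / real N"
      by (rule eventually_sequentiallyI[of 1]) simp
    have "((\<lambda>N. (ln (real N) / real N) powr (1/4)) \<longlongrightarrow> 0 powr (1/4)) sequentially"
      by (rule tendsto_powr'[OF l tendsto_const]) (use ev in auto)
    thus ?thesis by (simp add: qf_def[abs_def])
  qed
  have qsmall: "\<forall>\<^sub>F N in sequentially. qf N * Xc < Y" if "Y > 0" for Xc Y :: real
  proof -
    have "((\<lambda>N. qf N * Xc) \<longlongrightarrow> 0 * Xc) sequentially" by (intro tendsto_mult qlim tendsto_const)
    thus ?thesis using that by (intro order_tendstoD(2)) auto
  qed
  have Nlarge: "\<forall>\<^sub>F N in sequentially. real N \<ge> T" for T :: real
    by (rule eventually_sequentiallyI[of "nat \<lceil>T\<rceil>"]) linarith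
  show ?thesis
  proof (intro allI impI)
    fix c :: real assume c: "c > 0"
    define B where "B = 2 * sqrt c + 1"
    define K where "K = (B + 1) / f0"
    define A1 where "A1 = 2 * sqrt (Mf * K * (c + 1)) + 1"
    define Q where "Q = Ck + Lf * K\<^sup>2 + Mf * K + 1"
    define A where "A = (B + Ck + 1) * (\<bar>g0\<bar> * (Lf * K\<^sup>2 + A1 + Mf * K + 1) / f0 + Lg * K\<^sup>2)
         + \<bar>g0\<bar> / (2 * f0) * (2 * B * Ck + Ck\<^sup>2 + B + Ck) + 1"
    have B: "B > 0" unfolding B_def using real_sqrt_ge_zero[of c] c by linarith
    have K: "K > 0" using B f0 by (simp add: K_def)
    have "0 \<le> sqrt (Mf * K * (c + 1))" using Mf K c by simp
    hence A1: "A1 > 0" unfolding A1_def by linarith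
    have Q: "Q \<ge> 0" using Ck Lf Mf K by (simp add: Q_def)
    have B2: "B\<^sup>2 / 4 \<ge> c"
    proof -
      have "B\<^sup>2 = 4 * (sqrt c)\<^sup>2 + 4 * sqrt c + 1" by (simp add: B_def power2_eq_square algebra_simps)
      also have "(sqrt c)\<^sup>2 = c" using c by simp
      finally show ?thesis using c by simp
    qed
    have A12: "A1\<^sup>2 \<ge> 4 * Mf * K * (c + 1)"
    proof -
      have x0: "Mf * K * (c + 1) \<ge> 0" using Mf K c by simp
      have "A1\<^sup>2 = 4 * (sqrt (Mf * K * (c + 1)))\<^sup>2 + 4 * sqrt (Mf * K * (c + 1)) + 1"
        by (simp add: A1_def power2_eq_square algebra_simps)
      also have "(sqrt (Mf * K * (c + 1)))\<^sup>2 = Mf * K * (c + 1)" using x0 by simp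
      finally show ?thesis using x0 by simp
    qed
    have Apos: "A > 0"
    proof -
      have "(B + Ck + 1) * (\<bar>g0\<bar> * (Lf * K\<^sup>2 + A1 + Mf * K + 1) / f0 + Lg * K\<^sup>2) \<ge> 0"
        using B Ck Lf Lg K A1 Mf f0 by (intro mult_nonneg_nonneg add_nonneg_nonneg divide_nonneg_pos) auto
      moreover have "\<bar>g0\<bar> / (2 * f0) * (2 * B * Ck + Ck\<^sup>2 + B + Ck) \<ge> 0"
        using B Ck f0 by (intro mult_nonneg_nonneg add_nonneg_nonneg divide_nonneg_pos) auto
      ultimately show ?thesis by (simp add: A_def)
    qed
    have "\<forall>\<^sub>F N in sequentially. N \<ge> N1 \<and> real N \<ge> 3 \<and> real N \<ge> 2 / \<alpha> \<and> real N \<ge> (Ck + 1) / \<alpha>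
        \<and> real N \<ge> Ck / (1 - \<alpha>)
        \<and> qf N * (2 * K) < \<delta> \<and> qf N * K < 1 \<and> qf N * (2 * B) < \<alpha> \<and> qf N * A1 < 2 * Mf * K
        \<and> qf N * (A1 + Q) < 1 \<and> qf N * 1 < 1"
      using \<delta> \<alpha> Mf K
      by (intro eventually_conj eventually_ge_at_top Nlarge qsmall) auto
    then obtain N0 where N0: "\<And>N. N \<ge> N0 \<Longrightarrow> N \<ge> N1 \<and> real N \<ge> 3 \<and> real N \<ge> 2 / \<alpha> \<and> real N \<ge> (Ck + 1) / \<alpha>
        \<and> real N \<ge> Ck / (1 - \<alpha>)
        \<and> qf N * (2 * K) < \<delta> \<and> qf N * K < 1 \<and> qf N * (2 * B) < \<alpha> \<and> qf N * A1 < 2 * Mf * K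
        \<and> qf N * (A1 + Q) < 1 \<and> qf N * 1 < 1"
      by (auto simp: eventually_sequentially)
    show "\<exists>A>0. \<exists>C N0. \<forall>N\<ge>N0. \<exists>E\<in>sets M.
     {\<omega> \<in> space M.
        \<bar>(let \<xi> = quantile F \<alpha>; Na = count_le X N \<xi> \<omega> in
           conv_sum (k N) (int Na) (\<lambda>i. G (order_stat X N \<omega> i) - G \<xi>) / real N
           - ( - (real Na - \<alpha> * real N)\<^sup>2 / (2 * (real N)\<^sup>2) * (g \<xi> / f \<xi>)))\<bar>
        > A * (ln (real N) / real N) powr (5/4)} \<subseteq> E
     \<and> measure M E \<le> C * real N powr (- c)"
    proof (rule exI[of _ A], intro conjI Apos, rule exI[of _ 8], rule exI[of _ N0], intro allI impI)
      fix N assume "N \<ge> N0"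
      note NN = N0[OF this]
      have NN1: "N \<ge> N1" and NN2: "real N \<ge> 3" and NN3: "real N \<ge> 2 / \<alpha>"
        and NN4: "real N \<ge> (Ck + 1) / \<alpha>" and NN5: "real N \<ge> Ck / (1 - \<alpha>)"
        and NQ1: "qf N * (2 * K) < \<delta>" and NQ2: "qf N * K < 1" and NQ3: "qf N * (2 * B) < \<alpha>"
        and NQ4: "qf N * A1 < 2 * Mf * K" and NQ5: "qf N * (A1 + Q) < 1" and NQ6: "qf N < 1"
        using NN by auto
      define n where "n = real N"
      have n3: "n \<ge> 3" using NN by (simp add: n_def)
      have npos: "n > 0" using n3 by simp
      have N1': "N \<ge> 1" using n3 by (simp add: n_def)
      define lN where "lN = ln n / n"
      have lnn: "ln n \<ge> 1"
      proof -
        have "exp 1 \<le> (3::real)" using exp_le by simp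
        hence "exp 1 \<le> n" using n3 by linarith
        thus ?thesis using npos by (simp add: ln_ge_iff)
      qed
      have lNpos: "lN > 0" using lnn npos n3 unfolding lN_def by (intro divide_pos_pos) auto
      define q where "q = qf N"
      have q_eq: "q = lN powr (1/4)" by (simp add: q_def qf_def lN_def n_def)
      have q0: "q > 0" using lNpos q_eq by simp
      have q4: "q ^ 4 = lN" using lNpos by (simp add: q_eq powr_power)
      have q5: "q ^ 5 = lN powr (5/4)" using lNpos by (simp add: q_eq powr_power)
      have q1: "q \<le> 1" using NQ6 by (simp add: q_def)
      have nq4: "n * q ^ 4 = ln n" using npos by (simp add: q4 lN_def)
      have invn: "1 / n \<le> q ^ 4" using lnn npos by (simp add: q4 lN_def divide_right_mono)
      have qq: "q\<^sup>2 \<le> q" using q0 q1 by (simp add: power2_eq_square mult_le_cancel_right1)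
      define r where "r = K * q\<^sup>2"
      define D where "D = A1 * n * q ^ 3"
      have r0: "r > 0" using K q0 by (simp add: r_def)
      have rK: "r \<le> K * q" using qq K by (simp add: r_def)
      have "K * q * 2 < \<delta>" using NQ1 by (simp add: q_def algebra_simps)
      moreover have "K * q > 0" using K q0 by simp
      ultimately have r\<delta>: "r < \<delta>" using rK by linarith
      have r1: "r \<le> 1" using rK NQ2 unfolding q_def by (simp add: algebra_simps)
      have D0: "D > 0" using A1 npos q0 by (simp add: D_def)
      define tj where "tj j = \<xi> + real_of_int j * r / real N" for j :: int
      have tjr: "\<bar>tj j - \<xi>\<bar> \<le> r" if "- int N \<le> j" "j \<le> int N" for j
      proof -
        have "\<bar>real_of_int j\<bar> \<le> real N" using that by linarith
        hence "\<bar>real_of_int j\<bar> * r / real N \<le> real N * r / real N" using r0 npos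
          by (intro divide_right_mono mult_right_mono) (auto simp: n_def)
        thus ?thesis using npos r0 by (simp add: tj_def abs_mult abs_divide n_def)
      qed
      define B1 where "B1 = {\<omega> \<in> space M. B * n * q\<^sup>2 \<le> \<bar>real (count_le X N \<xi> \<omega>) - real N * F \<xi>\<bar>}"
      define B2 where "B2 j = {\<omega> \<in> space M. D \<le> \<bar>real (count_le X N (tj j) \<omega>) - real (count_le X N \<xi> \<omega>) - real N * (F (tj j) - F \<xi>)\<bar>}" for j
      define E where "E = B1 \<union> (\<Union>j\<in>{- int N..int N}. B2 j)"
      have B1m: "B1 \<in> sets M" unfolding B1_def by measurable
      have B2m: "B2 j \<in> sets M" for j unfolding B2_def by measurable
      have Em: "E \<in> sets M" unfolding E_def using B1m B2m by auto
      have PB1: "measure M B1 \<le> 2 * n powr (- c)"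
      proof -
        have eps: "B * n * q\<^sup>2 > 0" using B npos q0 by simp
        have "B * q\<^sup>2 \<le> B * q" using qq B by (intro mult_left_mono) auto
        moreover have "B * q * 2 < \<alpha>" using NQ3 by (simp add: q_def algebra_simps)
        ultimately have "B * q\<^sup>2 \<le> 2" using \<alpha> by linarith
        hence eps2: "B * n * q\<^sup>2 \<le> 2 * real N" using npos by (simp add: n_def mult.commute mult.left_commute)
        have m: "measure M B1 \<le> 2 * exp (- (B * n * q\<^sup>2)\<^sup>2 / (4 * real N))"
          unfolding B1_def by (rule prob_count_bound[OF ps rv indep ident F_def N1' eps eps2])
        have ex: "- (B * n * q\<^sup>2)\<^sup>2 / (4 * real N) = - (B\<^sup>2 / 4 * ln n)"
        proof -
          have "(B * n * q\<^sup>2)\<^sup>2 = B\<^sup>2 * n * (n * q ^ 4)" by (simp add: eval_nat_numeral algebra_simps)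
          thus ?thesis using npos nq4 by (simp add: n_def)
        qed
        have e2: "exp (- (B\<^sup>2 / 4 * ln n)) \<le> exp (- (c * ln n))"
          using B2 lnn by (simp add: mult_right_mono)
        have e3: "exp (- (c * ln n)) = n powr (- c)" using npos by (simp add: powr_def)
        have m2: "measure M B1 \<le> 2 * exp (- (B\<^sup>2 / 4 * ln n))" using m unfolding ex .
        show ?thesis using m2 e2 e3 by linarith
      qed
      have PB2: "measure M (B2 j) \<le> 2 * n powr (- c) / n" if j: "- int N \<le> j" "j \<le> int N" for j
      proof -
        have p: "Mf * r > 0" using Mf r0 by simp
        have Fp: "\<bar>F (tj j) - F \<xi>\<bar> \<le> Mf * r"
          using Fdev[of "tj j"] tjr[OF j] r\<delta> F\<xi> Mf by (auto intro: order_trans mult_left_mono)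
        have eps2: "D \<le> 2 * real N * (Mf * r)"
        proof -
          have "A1 * q * (n * q\<^sup>2) \<le> 2 * Mf * K * (n * q\<^sup>2)"
            using NQ4 npos q0 by (intro mult_right_mono) (auto simp: q_def mult.commute)
          thus ?thesis by (simp add: D_def r_def n_def power_numeral_reduce algebra_simps)
        qed
        have m: "measure M (B2 j) \<le> 2 * exp (- D\<^sup>2 / (4 * real N * (Mf * r)))"
          unfolding B2_def by (rule prob_dev_bound[OF ps rv indep ident F_def N1' p Fp D0 eps2])
        have ex: "- D\<^sup>2 / (4 * real N * (Mf * r)) = - (A1\<^sup>2 / (4 * Mf * K) * ln n)"
        proof -
          have "D\<^sup>2 = A1\<^sup>2 * (n * q ^ 4) * (n * q\<^sup>2)" by (simp add: D_def eval_nat_numeral algebra_simps)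
          hence d2: "D\<^sup>2 = (A1\<^sup>2 * ln n) * (n * q\<^sup>2)" using nq4 by simp
          have den: "4 * real N * (Mf * r) = (4 * Mf * K) * (n * q\<^sup>2)" by (simp add: n_def r_def algebra_simps)
          have nz: "n * q\<^sup>2 \<noteq> 0" using npos q0 by simp
          show ?thesis unfolding d2 den using nz Mf K by (simp add: field_simps)
        qed
        have e2: "exp (- (A1\<^sup>2 / (4 * Mf * K) * ln n)) \<le> exp (- ((c + 1) * ln n))"
        proof -
          have "A1\<^sup>2 / (4 * Mf * K) \<ge> c + 1" using A12 Mf K by (simp add: le_divide_eq algebra_simps)
          hence "(c + 1) * ln n \<le> A1\<^sup>2 / (4 * Mf * K) * ln n" using lnn by (intro mult_right_mono) auto
          thus ?thesis by simp
        qed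
        have e3: "exp (- ((c + 1) * ln n)) = n powr (- c) / n"
        proof -
          have "exp (- ((c + 1) * ln n)) = exp (- (c * ln n)) * exp (- ln n)" by (simp add: algebra_simps flip: exp_add)
          also have "exp (- ln n) = 1 / n" using npos by (simp add: exp_minus inverse_eq_divide)
          also have "exp (- (c * ln n)) = n powr (- c)" using npos by (simp add: powr_def)
          finally show ?thesis by simp
        qed
        have m2: "measure M (B2 j) \<le> 2 * exp (- (A1\<^sup>2 / (4 * Mf * K) * ln n))" using m unfolding ex .
        show ?thesis using m2 e2 e3 by linarith
      qed
      have PE: "measure M E \<le> 8 * real N powr (- c)"
      proof -
        have "measure M E \<le> measure M B1 + measure M (\<Union>j\<in>{- int N..int N}. B2 j)"
          unfolding E_def using B1m B2m by (intro measure_Un_le) auto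
        also have "measure M (\<Union>j\<in>{- int N..int N}. B2 j) \<le> (\<Sum>j\<in>{- int N..int N}. measure M (B2 j))"
          using B2m by (intro measure_UNION_le) auto
        also have "\<dots> \<le> (\<Sum>j\<in>{- int N..int N}. 2 * n powr (- c) / n)"
          using PB2 by (intro sum_mono) auto
        also have "\<dots> = (2 * n + 1) * (2 * n powr (- c) / n)" by (simp add: n_def)
        also have "\<dots> \<le> 6 * n powr (- c)"
        proof -
          have "(2 * n + 1) * (2 * n powr (- c) / n) = (2 + 1 / n) * 2 * n powr (- c)"
            using npos by (simp add: field_simps)
          also have "\<dots> \<le> 3 * 2 * n powr (- c)"
            using npos n3 by (intro mult_right_mono) (auto simp: divide_le_eq)
          finally show ?thesis by simp
        qed
        finally show ?thesis using PB1 by (simp add: n_def)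
      qed
      show "\<exists>E\<in>sets M.
        {\<omega> \<in> space M.
        \<bar>(let \<xi> = quantile F \<alpha>; Na = count_le X N \<xi> \<omega> in
           conv_sum (k N) (int Na) (\<lambda>i. G (order_stat X N \<omega> i) - G \<xi>) / real N
           - ( - (real Na - \<alpha> * real N)\<^sup>2 / (2 * (real N)\<^sup>2) * (g \<xi> / f \<xi>)))\<bar>
        > A * (ln (real N) / real N) powr (5/4)} \<subseteq> E
        \<and> measure M E \<le> 8 * real N powr (- c)"
      proof (intro bexI[OF _ Em] conjI PE subsetI)
        fix \<omega> assume "\<omega> \<in> {\<omega> \<in> space M.
        \<bar>(let \<xi> = quantile F \<alpha>; Na = count_le X N \<xi> \<omega> in
           conv_sum (k N) (int Na) (\<lambda>i. G (order_stat X N \<omega> i) - G \<xi>) / real N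
           - ( - (real Na - \<alpha> * real N)\<^sup>2 / (2 * (real N)\<^sup>2) * (g \<xi> / f \<xi>)))\<bar>
        > A * (ln (real N) / real N) powr (5/4)}"
        hence \<omega>: "\<omega> \<in> space M" and big: "\<bar>conv_sum (k N) (int (count_le X N \<xi> \<omega>)) (\<lambda>i. G (order_stat X N \<omega> i) - G \<xi>) / real N
           - ( - (real (count_le X N \<xi> \<omega>) - \<alpha> * real N)\<^sup>2 / (2 * (real N)\<^sup>2) * (g0 / f0))\<bar> > A * q ^ 5"
          by (simp_all add: Let_def \<xi>_def[symmetric] f0_def g0_def q5 lN_def n_def)
        show "\<omega> \<in> E"
        proof (rule ccontr)
          assume nE: "\<omega> \<notin> E"
          define Na where "Na = count_le X N \<xi> \<omega>"
          define cnt where "cnt t = count_le X N t \<omega>" for t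
          define a where "a = real Na - \<alpha> * real N"
          define b where "b = real_of_int (k N) - \<alpha> * real N"
          have nB1: "\<bar>a\<bar> < B * n * q\<^sup>2"
            using nE \<omega> unfolding E_def B1_def by (auto simp: a_def Na_def F\<xi> mult.commute)
          have grid: "\<bar>real (cnt (\<xi> + real_of_int j * r / real N)) - real (cnt \<xi>)
              - real N * (F (\<xi> + real_of_int j * r / real N) - \<alpha>)\<bar> \<le> D"
            if "- int N \<le> j" "j \<le> int N" for j
          proof -
            have "\<omega> \<notin> B2 j" using nE that unfolding E_def by auto
            thus ?thesis using \<omega> unfolding B2_def tj_def cnt_def by (auto simp: F\<xi>)
          qed
          have Finc': "F t - F s \<le> Mf * (t - s)" if "\<bar>s - \<xi>\<bar> \<le> r" "\<bar>t - \<xi>\<bar> \<le> r" "s \<le> t" for s t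
            using Finc[of s t] that r\<delta> by (auto simp: abs_le_iff)
          have U: "\<bar>real (cnt t) - real (cnt \<xi>) - real N * (F t - \<alpha>)\<bar> \<le> D + Mf * r"
            if "\<bar>t - \<xi>\<bar> \<le> r" for t
            by (rule interp[OF N1' r0 _ Finc' grid that]) (use Mf in \<open>auto simp: cnt_def cntmono\<close>)
          have os_iff: "\<And>i t. 1 \<le> i \<Longrightarrow> i \<le> int N \<Longrightarrow> (order_stat X N \<omega> i \<le> t \<longleftrightarrow> i \<le> int (cnt t))"
            unfolding cnt_def by (rule order_stat_le_iff)
          have TF': "\<bar>F t - \<alpha> - f0 * (t - \<xi>)\<bar> \<le> Lf * (t - \<xi>)\<^sup>2" if "\<bar>t - \<xi>\<bar> \<le> r" for t
            using TF that r\<delta> by simp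
          have TG': "\<bar>G t - G \<xi> - g0 * (t - \<xi>)\<bar> \<le> Lg * (t - \<xi>)\<^sup>2" if "\<bar>t - \<xi>\<bar> \<le> r" for t
            using TG that r\<delta> by simp
          have D2: "D + Mf * r \<ge> 0" using D0 Mf r0 by simp
          have kb': "\<bar>b\<bar> \<le> Ck" using kb[OF NN1] by (simp add: b_def)
          have aN: "\<alpha> * real N \<ge> Ck + 1" using NN4 \<alpha> by (simp add: divide_le_eq mult.commute)
          have aN2: "\<alpha> * real N + Ck \<le> real N" using NN5 \<alpha> by (simp add: divide_le_eq algebra_simps)
          have k1: "1 \<le> k N" using kb' aN by (simp add: b_def abs_le_iff)
          have k2: "k N \<le> int N" using kb' aN2 by (simp add: b_def abs_le_iff)
          have m1: "1 \<le> cnt \<xi>"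
          proof -
            have "B * q\<^sup>2 \<le> B * q" using qq B by (intro mult_left_mono) auto
            moreover have "B * q * 2 < \<alpha>" using NQ3 by (simp add: q_def algebra_simps)
            ultimately have "B * q\<^sup>2 * n \<le> \<alpha> / 2 * n" using npos by (intro mult_right_mono) auto
            moreover have "\<alpha> * real N \<ge> 2" using NN3 \<alpha> by (simp add: divide_le_eq mult.commute)
            ultimately have "real Na \<ge> 1" using nB1 by (simp add: a_def n_def abs_less_iff algebra_simps)
            thus ?thesis by (simp add: cnt_def Na_def)
          qed
          have m2: "cnt \<xi> \<le> N" by (simp add: cnt_def cntle)
          define \<eta> where "\<eta> = (Lf * r\<^sup>2 + (D + Mf * r + 1) / real N) / f0"
          have rng0: "\<bar>a - b\<bar> / (n * f0) + \<eta> \<le> r"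
            by (rule rng_alg[where B=B and Ck=Ck and ?A1.0=A1 and Mf=Mf and Lf=Lf and K=K and ?D2.0="D + Mf * r"])
               (use n3 q0 q1 invn B Ck A1 Mf Lf f0 nB1 kb' NQ5 in \<open>auto simp: K_def r_def D_def n_def \<eta>_def Q_def q_def\<close>)
          have ab: "a - b = real_of_int (int Na - k N)" by (simp add: a_def b_def)
          have rng: "\<bar>real_of_int (k N - int (cnt \<xi>))\<bar> / (real N * f0) + \<eta> \<le> r"
            using rng0 by (simp add: ab cnt_def Na_def n_def abs_minus_commute)
          have det: "\<bar>conv_sum (k N) (int (cnt \<xi>)) (\<lambda>i. G (order_stat X N \<omega> i) - G \<xi>)
               + g0 / (real N * f0) * real_of_int \<bar>int (cnt \<xi>) - k N\<bar> * (real_of_int \<bar>int (cnt \<xi>) - k N\<bar> + 1) / 2\<bar>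
             \<le> (real_of_int \<bar>int (cnt \<xi>) - k N\<bar> + 1) * (\<bar>g0\<bar> * \<eta> + Lg * r\<^sup>2)"
            by (rule DET[OF N1' os_iff U TF' TG' f0 Lf Lg D2 k1 k2 m1 m2 rng \<eta>_def])
          have det': "\<bar>conv_sum (k N) (int Na) (\<lambda>i. G (order_stat X N \<omega> i) - G \<xi>)
               + g0 / (n * f0) * \<bar>a - b\<bar> * (\<bar>a - b\<bar> + 1) / 2\<bar>
             \<le> (\<bar>a - b\<bar> + 1) * (\<bar>g0\<bar> * \<eta> + Lg * r\<^sup>2)"
            using det by (simp add: ab cnt_def Na_def n_def)
          have fin: "\<bar>conv_sum (k N) (int Na) (\<lambda>i. G (order_stat X N \<omega> i) - G \<xi>) / n
               - (- a\<^sup>2 / (2 * n\<^sup>2) * (g0 / f0))\<bar> \<le> A * q ^ 5"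
            unfolding A_def
            by (rule final_alg[OF _ q0 q1 invn _ _ _ _ _ _ _ f0 _ kb' det' r_def \<eta>_def[folded n_def]])
               (use n3 B Ck K A1 Mf Lf Lg nB1 in \<open>auto simp: D_def\<close>)
          show False using fin big by (simp add: a_def Na_def n_def)
        qed
      qed
    qed
  qed
qed

end
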